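(* Under the setting in the context, $$n^{-2}\Big(\sum_{k=1}^nV_k^2-\frac{\langle\overline{\mathbf V}_{\boldsymbol\xi}\tilde{\mathbf u},\tilde{\mathbf u}\rangle}{4\alpha\beta}\sum_{k=1}^nU_{k-1}\Big)\to0$$ in probability as $n\to\infty$.
   Context: Setting: $\mathbf X_k=(X_{k,1},X_{k,2})^\top$, $\mathbf X_0=\mathbf 0$, and for $k\in\mathbb N$, $\mathbf X_k=\sum_{j=1}^{X_{k-1,1}}\boldsymbol\xi_{k,j,1}+\sum_{j=1}^{X_{k-1,2}}\boldsymbol\xi_{k,j,2}+\boldsymbol\varepsilon_k$, where $\{\boldsymbol\xi_{k,j,i},\boldsymbol\varepsilon_k:k,j\in\mathbb N,i\in\{1,2\}\}$ are independent $\mathbb Z_+^2$-valued random vectors and each of the families $\{\boldsymbol\xi_{k,j,1}\}$, $\{\boldsymbol\xi_{k,j,2}\}$, $\{\boldsymbol\varepsilon_k\}$ is identically distributed. $\mathbb E\boldsymbol\xi_{1,1,1}=(\alpha,\beta)^\top$, $\mathbb E\boldsymbol\xi_{1,1,2}=(\beta,\alpha)^\top$, with $(\alpha,\beta)\in(0,1)^2$, $\alpha+\beta=1$. Assume $\mathbb E\|\boldsymbol\xi_{1,1,1}\|^8,\mathbb E\|\boldsymbol\xi_{1,1,2}\|^8,\mathbb E\|\boldsymbol\varepsilon_1\|^8<\infty$ and $\mathbb E\boldsymbol\varepsilon_1\neq\mathbf 0$. $\mathbf V_{\boldsymbol\xi_i}=\operatorname{Var}(\boldsymbol\xi_{1,1,i})$,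 $\overline{\mathbf V}_{\boldsymbol\xi}=\frac12(\mathbf V_{\boldsymbol\xi_1}+\mathbf V_{\boldsymbol\xi_2})$, $\mathbf 1=(1,1)^\top$, $\tilde{\mathbf u}=(1,-1)^\top$, $U_k=\langle\mathbf 1,\mathbf X_k\rangle=X_{k,1}+X_{k,2}$, $V_k=\langle\tilde{\mathbf u},\mathbf X_k\rangle=X_{k,1}-X_{k,2}$. *)

theory Defs
  imports "HOL-Probability.Probability"
begin

text \<open>Random vectors with values in Z_+^2 are modelled as functions into nat^2.\<close>

definition vreal :: "nat^2 \<Rightarrow> real^2" where
  "vreal x = (\<chi> i. real (x $ i))"

text \<open>Index set of the independent family: XiI k j i is xi_{k,j,i}, EpsI k is eps_k.\<close>
datatype noise_idx = XiI nat nat nat | EpsI nat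

definition noise_indices :: "noise_idx set" where
  "noise_indices = {XiI k j i | k j i. k \<ge> 1 \<and> j \<ge> 1 \<and> i \<in> {1,2}} \<union> {EpsI k | k. k \<ge> 1}"

definition noise_family ::
  "(nat \<Rightarrow> nat \<Rightarrow> 'a \<Rightarrow> nat^2) \<Rightarrow> (nat \<Rightarrow> nat \<Rightarrow> 'a \<Rightarrow> nat^2) \<Rightarrow> (nat \<Rightarrow> 'a \<Rightarrow> nat^2)
    \<Rightarrow> noise_idx \<Rightarrow> 'a \<Rightarrow> nat^2" where
  "noise_family xi1 xi2 eps idx = (case idx of
      XiI k j i \<Rightarrow> (if i = 1 then xi1 k j else xi2 k j)
    | EpsI k \<Rightarrow> eps k)"

fun bpi :: "(nat \<Rightarrow> nat \<Rightarrow> 'a \<Rightarrow> nat^2) \<Rightarrow> (nat \<Rightarrow> nat \<Rightarrow> 'a \<Rightarrow> nat^2) \<Rightarrow> (nat \<Rightarrow> 'a \<Rightarrow> nat^2)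
    \<Rightarrow> nat \<Rightarrow> 'a \<Rightarrow> nat^2" where
  "bpi xi1 xi2 eps 0 \<omega> = 0"
| "bpi xi1 xi2 eps (Suc k) \<omega> =
     (\<Sum>j\<in>{1..bpi xi1 xi2 eps k \<omega> $ 1}. xi1 (Suc k) j \<omega>)
   + (\<Sum>j\<in>{1..bpi xi1 xi2 eps k \<omega> $ 2}. xi2 (Suc k) j \<omega>)
   + eps (Suc k) \<omega>"

definition var_mat :: "'a measure \<Rightarrow> ('a \<Rightarrow> real^'n) \<Rightarrow> real^'n^'n" where
  "var_mat M Y = (\<chi> a b. integral\<^sup>L M (\<lambda>\<omega>.
      (Y \<omega> $ a - (integral\<^sup>L M Y) $ a) * (Y \<omega> $ b - (integral\<^sup>L M Y) $ b)))"

definition conv_prob_zero :: "'a measure \<Rightarrow> (nat \<Rightarrow> 'a \<Rightarrow> real) \<Rightarrow> bool" where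
  "conv_prob_zero M Z \<longleftrightarrow>
     (\<forall>e>0. (\<lambda>n. measure M {\<omega> \<in> space M. \<bar>Z n \<omega>\<bar> > e}) \<longlonglongrightarrow> 0)"

end

theory Submission
  imports Defs
begin

fun stepF :: "nat \<Rightarrow> nat^2 \<Rightarrow> (noise_idx \<Rightarrow> nat^2) \<Rightarrow> nat^2" where
  "stepF k x g = (\<Sum>j\<in>{1..x $ 1}. g (XiI k j 1)) + (\<Sum>j\<in>{1..x $ 2}. g (XiI k j 2)) + g (EpsI k)"

fun bpiF :: "(noise_idx \<Rightarrow> nat^2) \<Rightarrow> nat \<Rightarrow> nat^2" where
  "bpiF g 0 = 0"
| "bpiF g (Suc k) = stepF (Suc k) (bpiF g k) g"

declare stepF.simps[simp del]

definition past :: "nat \<Rightarrow> noise_idx set" where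
  "past l = {XiI k j i | k j i. 1 \<le> k \<and> k < l \<and> 1 \<le> j \<and> i \<in> {1,2}} \<union> {EpsI k | k. 1 \<le> k \<and> k < l}"

definition pres :: "nat \<Rightarrow> noise_idx set" where
  "pres l = {XiI l j i | j i. 1 \<le> j \<and> i \<in> {1,2}} \<union> {EpsI l}"

lemma past_pres_disj: "past l \<inter> pres l = {}"
  unfolding past_def pres_def by auto

lemma past_sub: "past l \<subseteq> noise_indices"
  unfolding past_def noise_indices_def by auto

lemma pres_sub: "1 \<le> l \<Longrightarrow> pres l \<subseteq> noise_indices"
  unfolding pres_def noise_indices_def by auto

lemma stepF_cong:
  assumes "\<And>j i. 1 \<le> j \<Longrightarrow> i \<in> {1,2} \<Longrightarrow> g (XiI k j i) = g' (XiI k j i)" "g (EpsI k) = g' (EpsI k)"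
  shows "stepF k x g = stepF k x g'"
  using assms by (simp add: stepF.simps)

lemma bpiF_local:
  assumes "k < l" shows "bpiF (restrict g (past l)) k = bpiF g k"
  using assms
proof (induction k)
  case 0 then show ?case by simp
next
  case (Suc k)
  have "stepF (Suc k) (bpiF g k) (restrict g (past l)) = stepF (Suc k) (bpiF g k) g"
    by (rule stepF_cong) (use Suc.prems in \<open>auto simp: past_def\<close>)
  with Suc show ?case by (simp del: restrict_apply)
qed

lemma stepF_local:
  assumes "1 \<le> l" shows "stepF l x (restrict g (pres l)) = stepF l x g"
  by (rule stepF_cong) (auto simp: pres_def)

lemma bpi_bpiF: "bpi xi1 xi2 eps k \<omega> = bpiF (\<lambda>i. noise_family xi1 xi2 eps i \<omega>) k"
  by (induction k) (auto simp: noise_family_def stepF.simps)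

lemma measurable_add_count:
  fixes f g :: "'a \<Rightarrow> 'b::{countable, plus}"
  assumes "f \<in> measurable M (count_space UNIV)" "g \<in> measurable M (count_space UNIV)"
  shows "(\<lambda>x. f x + g x) \<in> measurable M (count_space UNIV)"
proof -
  have "(\<lambda>x. (\<lambda>a x. a + g x) (f x) x) \<in> measurable M (count_space UNIV)"
  proof (rule measurable_compose_countable[OF _ assms(1)])
    fix a :: 'b
    show "(\<lambda>x. a + g x) \<in> measurable M (count_space UNIV)"
      using measurable_compose[OF assms(2) measurable_count_space[of "\<lambda>b. a + b" UNIV]] by simp
  qed
  then show ?thesis by simp
qed

lemma measurable_sum_count:
  fixes F :: "'i \<Rightarrow> 'a \<Rightarrow> 'b::{countable, comm_monoid_add}"
  assumes "\<And>j. j \<in> S \<Longrightarrow> F j \<in> measurable M (count_space UNIV)"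
  shows "(\<lambda>x. \<Sum>j\<in>S. F j x) \<in> measurable M (count_space UNIV)"
proof (cases "finite S")
  case True then show ?thesis using assms
    by (induction S rule: finite_induct) (auto intro!: measurable_add_count)
qed simp

lemma meas_coord:
  "i \<in> I \<Longrightarrow> (\<lambda>g. g i) \<in> measurable (PiM I (\<lambda>_. count_space (UNIV::'b set))) (count_space UNIV)"
  by (rule measurable_component_singleton)

lemma meas_stepF:
  assumes "\<And>j i. 1 \<le> j \<Longrightarrow> i \<in> {1,2} \<Longrightarrow> XiI k j i \<in> I" "EpsI k \<in> I"
  shows "(\<lambda>g. stepF k x g) \<in> measurable (PiM I (\<lambda>_. count_space (UNIV::(nat^2) set))) (count_space UNIV)"
  unfolding stepF.simps
  by (intro measurable_add_count measurable_sum_count meas_coord) (use assms in auto)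

lemma meas_bpiF:
  assumes "k < l"
  shows "(\<lambda>g. bpiF g k) \<in> measurable (PiM (past l) (\<lambda>_. count_space UNIV)) (count_space UNIV)"
  using assms
proof (induction k)
  case 0 then show ?case by simp
next
  case (Suc k)
  have "(\<lambda>g. (\<lambda>x g. stepF (Suc k) x g) (bpiF g k) g) \<in> measurable (PiM (past l) (\<lambda>_. count_space UNIV)) (count_space UNIV)"
    by (rule measurable_compose_countable[OF meas_stepF Suc.IH]) (use Suc.prems in \<open>auto simp: past_def\<close>)
  then show ?case by simp
qed

lemma (in prob_space) indep_factor:
  fixes f :: "'p \<times> 'p \<Rightarrow> real" and S :: "'p measure" and T :: "'p measure"
    and P :: "'a \<Rightarrow> 'p" and Q :: "'a \<Rightarrow> 'p"
  assumes ind: "indep_var S P T Q"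
    and fm[measurable]: "f \<in> borel_measurable (S \<Otimes>\<^sub>M T)"
    and int: "integrable M (\<lambda>\<omega>. f (P \<omega>, Q \<omega>))"
  shows "(\<integral>\<omega>. f (P \<omega>, Q \<omega>) \<partial>M) = (\<integral>\<omega>. (\<integral>\<omega>'. f (P \<omega>, Q \<omega>') \<partial>M) \<partial>M)"
proof -
  have rvP[measurable]: "P \<in> measurable M S" and rvQ[measurable]: "Q \<in> measurable M T"
    using ind by (auto dest: indep_var_rv1 indep_var_rv2)
  have eq: "distr M S P \<Otimes>\<^sub>M distr M T Q = distr M (S \<Otimes>\<^sub>M T) (\<lambda>x. (P x, Q x))"
    using ind indep_var_distribution_eq by blast
  interpret P: prob_space "distr M S P" by (rule prob_space_distr) simp
  interpret Q: prob_space "distr M T Q" by (rule prob_space_distr) simp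
  interpret PQ: pair_prob_space "distr M S P" "distr M T Q" ..
  have int2: "integrable (distr M S P \<Otimes>\<^sub>M distr M T Q) f"
    unfolding eq by (subst integrable_distr_eq) (use int in auto)
  have "(\<integral>\<omega>. f (P \<omega>, Q \<omega>) \<partial>M) = integral\<^sup>L (distr M (S \<Otimes>\<^sub>M T) (\<lambda>x. (P x, Q x))) f"
    by (subst integral_distr) auto
  also have "\<dots> = integral\<^sup>L (distr M S P \<Otimes>\<^sub>M distr M T Q) f" unfolding eq ..
  also have "\<dots> = (\<integral>p. (\<integral>q. f (p, q) \<partial>distr M T Q) \<partial>distr M S P)"
    using PQ.integral_fst'[OF int2] by simp
  also have "\<dots> = (\<integral>\<omega>. (\<integral>q. f (P \<omega>, q) \<partial>distr M T Q) \<partial>M)"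
    by (subst integral_distr) (auto intro!: Q.borel_measurable_lebesgue_integral)
  also have "\<dots> = (\<integral>\<omega>. (\<integral>\<omega>'. f (P \<omega>, Q \<omega>') \<partial>M) \<partial>M)"
  proof (rule Bochner_Integration.integral_cong[OF refl])
    fix \<omega> assume "\<omega> \<in> space M"
    then have "P \<omega> \<in> space S" using rvP by (rule measurable_space[rotated])
    then show "(\<integral>q. f (P \<omega>, q) \<partial>distr M T Q) = (\<integral>\<omega>'. f (P \<omega>, Q \<omega>') \<partial>M)"
      by (subst integral_distr) auto
  qed
  finally show ?thesis .
qed

lemma (in prob_space) indep_factor_nn:
  fixes f :: "'p \<times> 'p \<Rightarrow> ennreal" and S :: "'p measure" and T :: "'p measure"
    and P :: "'a \<Rightarrow> 'p" and Q :: "'a \<Rightarrow> 'p"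
  assumes ind: "indep_var S P T Q"
    and fm[measurable]: "f \<in> borel_measurable (S \<Otimes>\<^sub>M T)"
  shows "(\<integral>\<^sup>+\<omega>. f (P \<omega>, Q \<omega>) \<partial>M) = (\<integral>\<^sup>+\<omega>. (\<integral>\<^sup>+\<omega>'. f (P \<omega>, Q \<omega>') \<partial>M) \<partial>M)"
proof -
  have rvP[measurable]: "P \<in> measurable M S" and rvQ[measurable]: "Q \<in> measurable M T"
    using ind by (auto dest: indep_var_rv1 indep_var_rv2)
  have eq: "distr M S P \<Otimes>\<^sub>M distr M T Q = distr M (S \<Otimes>\<^sub>M T) (\<lambda>x. (P x, Q x))"
    using ind indep_var_distribution_eq by blast
  interpret P: prob_space "distr M S P" by (rule prob_space_distr) simp
  interpret Q: prob_space "distr M T Q" by (rule prob_space_distr) simp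
  interpret PQ: pair_prob_space "distr M S P" "distr M T Q" ..
  have "(\<integral>\<^sup>+\<omega>. f (P \<omega>, Q \<omega>) \<partial>M) = integral\<^sup>N (distr M (S \<Otimes>\<^sub>M T) (\<lambda>x. (P x, Q x))) f"
    by (subst nn_integral_distr) auto
  also have "\<dots> = integral\<^sup>N (distr M S P \<Otimes>\<^sub>M distr M T Q) f" unfolding eq ..
  also have "\<dots> = (\<integral>\<^sup>+p. (\<integral>\<^sup>+q. f (p, q) \<partial>distr M T Q) \<partial>distr M S P)"
    using Q.nn_integral_fst[of f "distr M S P"] by simp
  also have "\<dots> = (\<integral>\<^sup>+\<omega>. (\<integral>\<^sup>+q. f (P \<omega>, q) \<partial>distr M T Q) \<partial>M)"
    by (subst nn_integral_distr) (auto intro!: Q.borel_measurable_nn_integral)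
  also have "\<dots> = (\<integral>\<^sup>+\<omega>. (\<integral>\<^sup>+\<omega>'. f (P \<omega>, Q \<omega>') \<partial>M) \<partial>M)"
  proof (rule nn_integral_cong)
    fix \<omega> assume "\<omega> \<in> space M"
    then have "P \<omega> \<in> space S" using rvP by (rule measurable_space[rotated])
    then show "(\<integral>\<^sup>+q. f (P \<omega>, q) \<partial>distr M T Q) = (\<integral>\<^sup>+\<omega>'. f (P \<omega>, Q \<omega>') \<partial>M)"
      by (subst nn_integral_distr) auto
  qed
  finally show ?thesis .
qed

locale bp = prob_space M for M :: "'a measure" +
  fixes xi1 xi2 :: "nat \<Rightarrow> nat \<Rightarrow> 'a \<Rightarrow> nat^2" and eps :: "nat \<Rightarrow> 'a \<Rightarrow> nat^2" and \<alpha> \<beta> :: real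
  assumes indep: "indep_vars (\<lambda>_. count_space UNIV) (noise_family xi1 xi2 eps) noise_indices"
    and id1: "\<And>k j. k \<ge> 1 \<Longrightarrow> j \<ge> 1 \<Longrightarrow>
                distr M (count_space UNIV) (xi1 k j) = distr M (count_space UNIV) (xi1 1 1)"
    and id2: "\<And>k j. k \<ge> 1 \<Longrightarrow> j \<ge> 1 \<Longrightarrow>
                distr M (count_space UNIV) (xi2 k j) = distr M (count_space UNIV) (xi2 1 1)"
    and ideps: "\<And>k. k \<ge> 1 \<Longrightarrow>
                distr M (count_space UNIV) (eps k) = distr M (count_space UNIV) (eps 1)"
    and ab: "0 < \<alpha>" "\<alpha> < 1" "0 < \<beta>" "\<beta> < 1" "\<alpha> + \<beta> = 1"
    and mean1: "integral\<^sup>L M (\<lambda>\<omega>. vreal (xi1 1 1 \<omega>)) = vector [\<alpha>, \<beta>]"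
    and mean2: "integral\<^sup>L M (\<lambda>\<omega>. vreal (xi2 1 1 \<omega>)) = vector [\<beta>, \<alpha>]"
    and mom1: "integrable M (\<lambda>\<omega>. norm (vreal (xi1 1 1 \<omega>)) ^ 8)"
    and mom2: "integrable M (\<lambda>\<omega>. norm (vreal (xi2 1 1 \<omega>)) ^ 8)"
    and mom3: "integrable M (\<lambda>\<omega>. norm (vreal (eps 1 \<omega>)) ^ 8)"
begin

abbreviation cs :: "noise_idx \<Rightarrow> (nat^2) measure" where "cs \<equiv> (\<lambda>_. count_space UNIV)"

definition NS :: "'a \<Rightarrow> noise_idx \<Rightarrow> nat^2" where
  "NS \<omega> = (\<lambda>i. noise_family xi1 xi2 eps i \<omega>)"
definition PP :: "nat \<Rightarrow> 'a \<Rightarrow> noise_idx \<Rightarrow> nat^2" where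
  "PP l \<omega> = restrict (NS \<omega>) (past l)"
definition QQ :: "nat \<Rightarrow> 'a \<Rightarrow> noise_idx \<Rightarrow> nat^2" where
  "QQ l \<omega> = restrict (NS \<omega>) (pres l)"

abbreviation XX :: "nat \<Rightarrow> 'a \<Rightarrow> nat^2" where "XX k \<equiv> bpi xi1 xi2 eps k"

lemma indep_PQ: "1 \<le> l \<Longrightarrow> indep_var (PiM (past l) cs) (PP l) (PiM (pres l) cs) (QQ l)"
  unfolding PP_def QQ_def NS_def
  by (rule indep_var_restrict[OF indep past_pres_disj past_sub pres_sub])

lemma meas_PP[measurable]: "PP l \<in> measurable M (PiM (past l) cs)"
  unfolding PP_def NS_def
  by (rule measurable_restrict) (use indep past_sub in \<open>auto simp: indep_vars_def\<close>)

lemma X_past: "k < l \<Longrightarrow> XX k \<omega> = bpiF (PP l \<omega>) k"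
  unfolding PP_def by (simp add: bpiF_local bpi_bpiF NS_def)

lemma X_step: "1 \<le> l \<Longrightarrow> XX l \<omega> = stepF l (XX (l-1) \<omega>) (QQ l \<omega>)"
  unfolding QQ_def
  by (cases l) (auto simp: stepF_local bpi_bpiF NS_def)

lemma X_step': "1 \<le> l \<Longrightarrow> XX l \<omega> = stepF l (XX (l-1) \<omega>) (NS \<omega>)"
  by (cases l) (auto simp: bpi_bpiF NS_def)

lemma meas_XX[measurable]: "XX k \<in> measurable M (count_space UNIV)"
proof -
  have "(\<lambda>\<omega>. bpiF (PP (Suc k) \<omega>) k) \<in> measurable M (count_space UNIV)"
    using measurable_compose[OF meas_PP meas_bpiF[of k "Suc k"]] by simp
  moreover have "XX k = (\<lambda>\<omega>. bpiF (PP (Suc k) \<omega>) k)" using X_past[of k "Suc k"] by auto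
  ultimately show ?thesis by simp
qed

lemma meas_fun_count: "(f :: (nat^2) \<Rightarrow> real) \<in> borel_measurable (count_space UNIV)"
  by simp

lemma cond:
  fixes w :: "(noise_idx \<Rightarrow> nat^2) \<Rightarrow> real" and \<phi> :: "nat^2 \<Rightarrow> nat^2 \<Rightarrow> real"
  assumes l: "1 \<le> l" and wm: "w \<in> borel_measurable (PiM (past l) cs)"
    and int: "integrable M (\<lambda>\<omega>. w (PP l \<omega>) * \<phi> (XX (l-1) \<omega>) (XX l \<omega>))"
  shows "(\<integral>\<omega>. w (PP l \<omega>) * \<phi> (XX (l-1) \<omega>) (XX l \<omega>) \<partial>M) =
         (\<integral>\<omega>. w (PP l \<omega>) * (\<integral>\<omega>'. \<phi> (XX (l-1) \<omega>) (stepF l (XX (l-1) \<omega>) (NS \<omega>')) \<partial>M) \<partial>M)"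
proof -
  define f where "f z = w (fst z) * \<phi> (bpiF (fst z) (l-1)) (stepF l (bpiF (fst z) (l-1)) (snd z))" for z
  have g: "(\<lambda>z. bpiF (fst z) (l-1)) \<in> measurable (PiM (past l) cs \<Otimes>\<^sub>M PiM (pres l) cs) (count_space UNIV)"
    using measurable_compose[OF measurable_fst meas_bpiF[of "l-1" l]] l by simp
  have fm: "f \<in> borel_measurable (PiM (past l) cs \<Otimes>\<^sub>M PiM (pres l) cs)"
  proof -
    have "(\<lambda>z. (\<lambda>a z. w (fst z) * \<phi> a (stepF l a (snd z))) (bpiF (fst z) (l-1)) z)
          \<in> borel_measurable (PiM (past l) cs \<Otimes>\<^sub>M PiM (pres l) cs)"
    proof (rule measurable_compose_countable[OF _ g])
      fix a
      have sn: "snd \<in> measurable (PiM (past l) cs \<Otimes>\<^sub>M PiM (pres l) cs) (PiM (pres l) cs)" by simp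
      have s: "(\<lambda>q. stepF l a q) \<in> measurable (PiM (pres l) cs) (count_space UNIV)"
        by (rule meas_stepF) (auto simp: pres_def)
      have m1: "(\<lambda>z. \<phi> a (stepF l a (snd z))) \<in> borel_measurable (PiM (past l) cs \<Otimes>\<^sub>M PiM (pres l) cs)"
        using measurable_compose[OF measurable_compose[OF sn s] meas_fun_count[of "\<phi> a"]] by simp
      have m2: "(\<lambda>z. w (fst z)) \<in> borel_measurable (PiM (past l) cs \<Otimes>\<^sub>M PiM (pres l) cs)"
        using measurable_compose[OF measurable_fst[of "PiM (past l) cs" "PiM (pres l) cs"] wm] by simp
      show "(\<lambda>z. w (fst z) * \<phi> a (stepF l a (snd z))) \<in> borel_measurable (PiM (past l) cs \<Otimes>\<^sub>M PiM (pres l) cs)"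
        by (rule borel_measurable_times[OF m2 m1])
    qed
    then show ?thesis unfolding f_def by simp
  qed
  have fPQ: "f (PP l \<omega>, QQ l \<omega>) = w (PP l \<omega>) * \<phi> (XX (l-1) \<omega>) (XX l \<omega>)" for \<omega>
    unfolding f_def using X_past[of "l-1" l \<omega>] X_step[OF l, of \<omega>] l by simp
  have inner: "f (PP l \<omega>, QQ l \<omega>') = w (PP l \<omega>) * \<phi> (XX (l-1) \<omega>) (stepF l (XX (l-1) \<omega>) (NS \<omega>'))" for \<omega> \<omega>'
    unfolding f_def using X_past[of "l-1" l \<omega>] l by (simp add: QQ_def stepF_local)
  have "(\<integral>\<omega>. f (PP l \<omega>, QQ l \<omega>) \<partial>M) = (\<integral>\<omega>. (\<integral>\<omega>'. f (PP l \<omega>, QQ l \<omega>') \<partial>M) \<partial>M)"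
    by (rule indep_factor[OF indep_PQ[OF l] fm]) (use int fPQ in simp)
  then show ?thesis unfolding fPQ inner by simp
qed

lemma cond_nn:
  fixes \<phi> :: "nat^2 \<Rightarrow> nat^2 \<Rightarrow> ennreal"
  assumes l: "1 \<le> l"
  shows "(\<integral>\<^sup>+\<omega>. \<phi> (XX (l-1) \<omega>) (XX l \<omega>) \<partial>M) =
         (\<integral>\<^sup>+\<omega>. (\<integral>\<^sup>+\<omega>'. \<phi> (XX (l-1) \<omega>) (stepF l (XX (l-1) \<omega>) (NS \<omega>')) \<partial>M) \<partial>M)"
proof -
  define f where "f z = \<phi> (bpiF (fst z) (l-1)) (stepF l (bpiF (fst z) (l-1)) (snd z))" for z
  have g: "(\<lambda>z. bpiF (fst z) (l-1)) \<in> measurable (PiM (past l) cs \<Otimes>\<^sub>M PiM (pres l) cs) (count_space UNIV)"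
    using measurable_compose[OF measurable_fst meas_bpiF[of "l-1" l]] l by simp
  have fm: "f \<in> borel_measurable (PiM (past l) cs \<Otimes>\<^sub>M PiM (pres l) cs)"
  proof -
    have "(\<lambda>z. (\<lambda>a z. \<phi> a (stepF l a (snd z))) (bpiF (fst z) (l-1)) z)
          \<in> borel_measurable (PiM (past l) cs \<Otimes>\<^sub>M PiM (pres l) cs)"
    proof (rule measurable_compose_countable[OF _ g])
      fix a
      have sn: "snd \<in> measurable (PiM (past l) cs \<Otimes>\<^sub>M PiM (pres l) cs) (PiM (pres l) cs)" by simp
      have s: "(\<lambda>q. stepF l a q) \<in> measurable (PiM (pres l) cs) (count_space UNIV)"
        by (rule meas_stepF) (auto simp: pres_def)
      have m: "\<phi> a \<in> borel_measurable (count_space UNIV)" by simp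
      show "(\<lambda>z. \<phi> a (stepF l a (snd z))) \<in> borel_measurable (PiM (past l) cs \<Otimes>\<^sub>M PiM (pres l) cs)"
        using measurable_compose[OF measurable_compose[OF sn s] m] by simp
    qed
    then show ?thesis unfolding f_def by simp
  qed
  have fPQ: "f (PP l \<omega>, QQ l \<omega>) = \<phi> (XX (l-1) \<omega>) (XX l \<omega>)" for \<omega>
    unfolding f_def using X_past[of "l-1" l \<omega>] X_step[OF l, of \<omega>] l by simp
  have inner: "f (PP l \<omega>, QQ l \<omega>') = \<phi> (XX (l-1) \<omega>) (stepF l (XX (l-1) \<omega>) (NS \<omega>'))" for \<omega> \<omega>'
    unfolding f_def using X_past[of "l-1" l \<omega>] l by (simp add: QQ_def stepF_local)
  have "(\<integral>\<^sup>+\<omega>. f (PP l \<omega>, QQ l \<omega>) \<partial>M) = (\<integral>\<^sup>+\<omega>. (\<integral>\<^sup>+\<omega>'. f (PP l \<omega>, QQ l \<omega>') \<partial>M) \<partial>M)"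
    by (rule indep_factor_nn[OF indep_PQ[OF l] fm])
  then show ?thesis unfolding fPQ inner by simp
qed

end

lemma (in prob_space) int_pow_le4:
  fixes f :: "'a \<Rightarrow> real"
  assumes fm: "f \<in> borel_measurable M" and i4: "integrable M (\<lambda>x. f x ^ 4)" and k: "k \<le> 4"
  shows "integrable M (\<lambda>x. f x ^ k)"
proof (rule Bochner_Integration.integrable_bound[of _ "\<lambda>x. 1 + f x ^ 4"])
  show "integrable M (\<lambda>x. 1 + f x ^ 4)" using i4 by simp
  show "(\<lambda>x. f x ^ k) \<in> borel_measurable M" using fm by simp
  show "AE x in M. norm (f x ^ k) \<le> norm (1 + f x ^ 4)"
  proof (rule AE_I2)
    fix x
    have a: "\<bar>f x\<bar> ^ k \<le> 1 + \<bar>f x\<bar> ^ 4"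
    proof (cases "\<bar>f x\<bar> \<le> 1")
      case True
      then have "\<bar>f x\<bar> ^ k \<le> 1" by (simp add: power_le_one)
      then show ?thesis by (smt (verit) zero_le_power abs_ge_zero)
    next
      case False
      then have "\<bar>f x\<bar> ^ k \<le> \<bar>f x\<bar> ^ 4" using False k by (intro power_increasing) auto
      then show ?thesis by simp
    qed
    have "\<bar>f x\<bar> ^ 4 = f x ^ 4" by (simp add: power_even_abs_numeral)
    then show "norm (f x ^ k) \<le> norm (1 + f x ^ 4)" using a
      by (simp add: power_abs)
  qed
qed

lemma (in prob_space) indep_pow_prod:
  fixes S Y :: "'a \<Rightarrow> real"
  assumes ind: "indep_var borel S borel Y"
    and iS: "integrable M (\<lambda>x. S x ^ k)" and iY: "integrable M (\<lambda>x. Y x ^ m)"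
  shows "integrable M (\<lambda>x. S x ^ k * Y x ^ m)"
    "(\<integral>x. S x ^ k * Y x ^ m \<partial>M) = (\<integral>x. S x ^ k \<partial>M) * (\<integral>x. Y x ^ m \<partial>M)"
proof -
  have ind2: "indep_var borel (\<lambda>x. S x ^ k) borel (\<lambda>x. Y x ^ m)"
    using indep_var_compose[OF ind, of "\<lambda>x. x ^ k" borel "\<lambda>x. x ^ m" borel] by (simp add: comp_def)
  show "integrable M (\<lambda>x. S x ^ k * Y x ^ m)"
    by (rule indep_var_integrable[OF ind2 iS iY])
  show "(\<integral>x. S x ^ k * Y x ^ m \<partial>M) = (\<integral>x. S x ^ k \<partial>M) * (\<integral>x. Y x ^ m \<partial>M)"
    by (rule indep_var_lebesgue_integral[OF ind2 iS iY])
qed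

lemma (in prob_space) indep_sum_moments:
  fixes Y :: "'i \<Rightarrow> 'a \<Rightarrow> real" and B2 B4 :: real
  assumes fin: "finite J" and ind: "indep_vars (\<lambda>_. borel) Y J"
    and i4: "\<And>i. i \<in> J \<Longrightarrow> integrable M (\<lambda>x. Y i x ^ 4)"
    and m0: "\<And>i. i \<in> J \<Longrightarrow> (\<integral>x. Y i x \<partial>M) = 0"
    and b2: "\<And>i. i \<in> J \<Longrightarrow> (\<integral>x. Y i x ^ 2 \<partial>M) \<le> B2"
    and b4: "\<And>i. i \<in> J \<Longrightarrow> (\<integral>x. Y i x ^ 4 \<partial>M) \<le> B4"
    and B2: "0 \<le> B2"
  shows "integrable M (\<lambda>x. (\<Sum>i\<in>J. Y i x) ^ 4) \<and> (\<integral>x. (\<Sum>i\<in>J. Y i x) \<partial>M) = 0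
       \<and> (\<integral>x. (\<Sum>i\<in>J. Y i x) ^ 2 \<partial>M) = (\<Sum>i\<in>J. \<integral>x. Y i x ^ 2 \<partial>M)
       \<and> (\<integral>x. (\<Sum>i\<in>J. Y i x) ^ 4 \<partial>M) \<le> real (card J) * B4 + 3 * (real (card J))^2 * B2^2"
  using fin ind i4 m0 b2 b4
proof (induction J rule: finite_induct)
  case empty then show ?case by simp
next
  case (insert a J)
  note IH = insert.IH[OF indep_vars_subset[OF insert.prems(1)]]
  have IH': "integrable M (\<lambda>x. (\<Sum>i\<in>J. Y i x) ^ 4) \<and> (\<integral>x. (\<Sum>i\<in>J. Y i x) \<partial>M) = 0
       \<and> (\<integral>x. (\<Sum>i\<in>J. Y i x) ^ 2 \<partial>M) = (\<Sum>i\<in>J. \<integral>x. Y i x ^ 2 \<partial>M)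
       \<and> (\<integral>x. (\<Sum>i\<in>J. Y i x) ^ 4 \<partial>M) \<le> real (card J) * B4 + 3 * (real (card J))^2 * B2^2"
    by (rule IH) (use insert.prems in auto)
  define S where "S x = (\<Sum>i\<in>J. Y i x)" for x
  define Z where "Z = Y a"
  have rv: "\<And>i. i \<in> insert a J \<Longrightarrow> Y i \<in> borel_measurable M"
    using insert.prems(1) by (auto simp: indep_vars_def)
  have Sm: "S \<in> borel_measurable M" unfolding S_def using rv by auto
  have Zm: "Z \<in> borel_measurable M" unfolding Z_def using rv by auto
  have indSZ: "indep_var borel S borel Z"
  proof -
    have r: "indep_var (PiM J (\<lambda>_. borel)) (\<lambda>x. restrict (\<lambda>i. Y i x) J) (PiM {a} (\<lambda>_. borel)) (\<lambda>x. restrict (\<lambda>i. Y i x) {a})"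
      by (rule indep_var_restrict[OF insert.prems(1)]) (use insert.hyps in auto)
    have m1: "(\<lambda>g. \<Sum>i\<in>J. g i) \<in> borel_measurable (PiM J (\<lambda>_. borel :: real measure))" by measurable
    have m2: "(\<lambda>g. g a) \<in> borel_measurable (PiM {a} (\<lambda>_. borel :: real measure))" by measurable
    show ?thesis using indep_var_compose[OF r m1 m2] by (simp add: comp_def S_def[abs_def] Z_def)
  qed
  have S4: "integrable M (\<lambda>x. S x ^ 4)" using IH' by (simp add: S_def)
  have Z4: "integrable M (\<lambda>x. Z x ^ 4)" using insert.prems(2) by (simp add: Z_def)
  have Sk: "k \<le> 4 \<Longrightarrow> integrable M (\<lambda>x. S x ^ k)" for k by (rule int_pow_le4[OF Sm S4])
  have Zk: "k \<le> 4 \<Longrightarrow> integrable M (\<lambda>x. Z x ^ k)" for k by (rule int_pow_le4[OF Zm Z4])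
  note P = indep_pow_prod[OF indSZ Sk Zk]
  have Pi31: "integrable M (\<lambda>x. S x ^ 3 * Z x)" using P(1)[of 3 1] by simp
  have Pi13: "integrable M (\<lambda>x. S x * Z x ^ 3)" using P(1)[of 1 3] by simp
  have Pi11: "integrable M (\<lambda>x. S x * Z x)" using P(1)[of 1 1] by simp
  have Pi22: "integrable M (\<lambda>x. S x ^ 2 * Z x ^ 2)" using P(1)[of 2 2] by simp
  have Pe31: "(\<integral>x. S x ^ 3 * Z x \<partial>M) = (\<integral>x. S x ^ 3 \<partial>M) * (\<integral>x. Z x \<partial>M)" using P(2)[of 3 1] by simp
  have Pe13: "(\<integral>x. S x * Z x ^ 3 \<partial>M) = (\<integral>x. S x \<partial>M) * (\<integral>x. Z x ^ 3 \<partial>M)" using P(2)[of 1 3] by simp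
  have Pe11: "(\<integral>x. S x * Z x \<partial>M) = (\<integral>x. S x \<partial>M) * (\<integral>x. Z x \<partial>M)" using P(2)[of 1 1] by simp
  have Pe22: "(\<integral>x. S x ^ 2 * Z x ^ 2 \<partial>M) = (\<integral>x. S x ^ 2 \<partial>M) * (\<integral>x. Z x ^ 2 \<partial>M)" using P(2)[of 2 2] by simp
  have S1: "integrable M S" using Sk[of 1] by simp
  have Z1: "integrable M Z" using Zk[of 1] by simp
  have S2: "integrable M (\<lambda>x. S x ^ 2)" "integrable M (\<lambda>x. Z x ^ 2)" "integrable M (\<lambda>x. S x ^ 4)" "integrable M (\<lambda>x. Z x ^ 4)" using Sk Zk by auto
  have ES: "(\<integral>x. S x \<partial>M) = 0" using IH' by (simp add: S_def)
  have EZ: "(\<integral>x. Z x \<partial>M) = 0" using insert.prems(3) by (simp add: Z_def)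
  have ES2: "(\<integral>x. S x ^ 2 \<partial>M) = (\<Sum>i\<in>J. \<integral>x. Y i x ^ 2 \<partial>M)" using IH' by (simp add: S_def)
  have ES4: "(\<integral>x. S x ^ 4 \<partial>M) \<le> real (card J) * B4 + 3 * (real (card J))^2 * B2^2" using IH' by (simp add: S_def)
  have EZ2: "(\<integral>x. Z x ^ 2 \<partial>M) \<le> B2" using insert.prems(4) by (simp add: Z_def)
  have EZ4: "(\<integral>x. Z x ^ 4 \<partial>M) \<le> B4" using insert.prems(5) by (simp add: Z_def)
  have ES2b: "(\<integral>x. S x ^ 2 \<partial>M) \<le> real (card J) * B2"
    using ES2 sum_mono[of J "\<lambda>i. \<integral>x. Y i x ^ 2 \<partial>M" "\<lambda>_. B2"] insert.prems(4) by auto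
  have ES2p: "0 \<le> (\<integral>x. S x ^ 2 \<partial>M)" by (rule integral_nonneg_AE) auto
  have EZ2p: "0 \<le> (\<integral>x. Z x ^ 2 \<partial>M)" by (rule integral_nonneg_AE) auto
  have sumeq: "(\<Sum>i\<in>insert a J. Y i x) = S x + Z x" for x
    using insert.hyps by (simp add: S_def Z_def)
  have e4: "(S x + Z x) ^ 4 = S x ^ 4 + 4 * (S x ^ 3 * Z x ^ 1) + 6 * (S x ^ 2 * Z x ^ 2)
      + 4 * (S x ^ 1 * Z x ^ 3) + Z x ^ 4" for x
    by (simp add: power2_eq_square power3_eq_cube power4_eq_xxxx algebra_simps)
  have e2: "(S x + Z x) ^ 2 = S x ^ 2 + 2 * (S x ^ 1 * Z x ^ 1) + Z x ^ 2" for x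
    by (simp add: power2_eq_square algebra_simps)
  have int4: "integrable M (\<lambda>x. (S x + Z x) ^ 4)"
    unfolding e4 using Pi31 Pi13 Pi22 S2 by (intro Bochner_Integration.integrable_add integrable_mult_right) auto
  have I4: "(\<integral>x. (S x + Z x) ^ 4 \<partial>M) = (\<integral>x. S x ^ 4 \<partial>M) + 6 * ((\<integral>x. S x ^ 2 \<partial>M) * (\<integral>x. Z x ^ 2 \<partial>M)) + (\<integral>x. Z x ^ 4 \<partial>M)"
    unfolding e4 using Pi31 Pi13 Pi22 S2 Pe31 Pe13 Pe22 ES EZ
    by (simp add: Bochner_Integration.integral_add Bochner_Integration.integrable_add)
  have I2: "(\<integral>x. (S x + Z x) ^ 2 \<partial>M) = (\<integral>x. S x ^ 2 \<partial>M) + (\<integral>x. Z x ^ 2 \<partial>M)"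
    unfolding e2 using Pi11 S2 Pe11 ES EZ
    by (simp add: Bochner_Integration.integral_add Bochner_Integration.integrable_add)
  have I1: "(\<integral>x. S x + Z x \<partial>M) = 0"
    using S1 Z1 ES EZ by simp
  have cardi: "card (insert a J) = Suc (card J)" using insert.hyps by simp
  have "(\<integral>x. S x ^ 2 \<partial>M) * (\<integral>x. Z x ^ 2 \<partial>M) \<le> (real (card J) * B2) * B2"
    by (rule mult_mono[OF ES2b EZ2]) (use B2 in auto)
  then have six: "6 * ((\<integral>x. S x ^ 2 \<partial>M) * (\<integral>x. Z x ^ 2 \<partial>M)) \<le> 6 * (real (card J) * B2 * B2)" by simp
  have alg: "3 * (real (card J))^2 * B2^2 + 6 * (real (card J) * B2 * B2) \<le> 3 * (real (card J) + 1)^2 * B2^2"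
    by (simp add: power2_eq_square algebra_simps)
  have bound: "(\<integral>x. (S x + Z x) ^ 4 \<partial>M) \<le> real (card (insert a J)) * B4 + 3 * (real (card (insert a J)))^2 * B2^2"
    unfolding I4 cardi using ES4 EZ4 six alg by (simp add: algebra_simps)
  show ?case
    unfolding sumeq using int4 I1 I2 bound insert.hyps ES2
    by (simp add: Z_def)
qed

context bp begin

lemma rv_noise: "i \<in> noise_indices \<Longrightarrow> noise_family xi1 xi2 eps i \<in> measurable M (count_space UNIV)"
  using indep by (auto simp: indep_vars_def)

lemma meas_xi1[measurable]: "1 \<le> k \<Longrightarrow> 1 \<le> j \<Longrightarrow> xi1 k j \<in> measurable M (count_space UNIV)"
  using rv_noise[of "XiI k j 1"] by (auto simp: noise_indices_def noise_family_def)
lemma meas_xi2[measurable]: "1 \<le> k \<Longrightarrow> 1 \<le> j \<Longrightarrow> xi2 k j \<in> measurable M (count_space UNIV)"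
  using rv_noise[of "XiI k j 2"] by (auto simp: noise_indices_def noise_family_def)
lemma meas_eps[measurable]: "1 \<le> k \<Longrightarrow> eps k \<in> measurable M (count_space UNIV)"
  using rv_noise[of "EpsI k"] by (auto simp: noise_indices_def noise_family_def)

lemma transfer_gen:
  fixes g :: "nat^2 \<Rightarrow> real"
  assumes X: "X \<in> measurable M (count_space UNIV)" and X': "X' \<in> measurable M (count_space UNIV)"
    and d: "distr M (count_space UNIV) X = distr M (count_space UNIV) X'"
  shows "(\<integral>\<omega>. g (X \<omega>) \<partial>M) = (\<integral>\<omega>. g (X' \<omega>) \<partial>M)"
    "integrable M (\<lambda>\<omega>. g (X \<omega>)) \<longleftrightarrow> integrable M (\<lambda>\<omega>. g (X' \<omega>))"
proof -
  have "(\<integral>\<omega>. g (X \<omega>) \<partial>M) = integral\<^sup>L (distr M (count_space UNIV) X) g"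
    using X by (subst integral_distr) auto
  also have "\<dots> = integral\<^sup>L (distr M (count_space UNIV) X') g" using d by simp
  also have "\<dots> = (\<integral>\<omega>. g (X' \<omega>) \<partial>M)"
    using X' by (subst integral_distr) auto
  finally show "(\<integral>\<omega>. g (X \<omega>) \<partial>M) = (\<integral>\<omega>. g (X' \<omega>) \<partial>M)" .
  have "integrable M (\<lambda>\<omega>. g (X \<omega>)) \<longleftrightarrow> integrable (distr M (count_space UNIV) X) g"
    using X by (subst integrable_distr_eq) auto
  also have "\<dots> \<longleftrightarrow> integrable (distr M (count_space UNIV) X') g" using d by simp
  also have "\<dots> \<longleftrightarrow> integrable M (\<lambda>\<omega>. g (X' \<omega>))"
    using X' by (subst integrable_distr_eq) auto
  finally show "integrable M (\<lambda>\<omega>. g (X \<omega>)) \<longleftrightarrow> integrable M (\<lambda>\<omega>. g (X' \<omega>))" .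
qed

lemma tr1: fixes g :: "nat^2 \<Rightarrow> real" assumes "1 \<le> k" "1 \<le> j"
  shows "(\<integral>\<omega>. g (xi1 k j \<omega>) \<partial>M) = (\<integral>\<omega>. g (xi1 1 1 \<omega>) \<partial>M)"
  "integrable M (\<lambda>\<omega>. g (xi1 k j \<omega>)) \<longleftrightarrow> integrable M (\<lambda>\<omega>. g (xi1 1 1 \<omega>))"
  using transfer_gen[OF meas_xi1[OF assms] meas_xi1[of 1 1] id1[OF assms], of g] by auto
lemma tr2: fixes g :: "nat^2 \<Rightarrow> real" assumes "1 \<le> k" "1 \<le> j"
  shows "(\<integral>\<omega>. g (xi2 k j \<omega>) \<partial>M) = (\<integral>\<omega>. g (xi2 1 1 \<omega>) \<partial>M)"
  "integrable M (\<lambda>\<omega>. g (xi2 k j \<omega>)) \<longleftrightarrow> integrable M (\<lambda>\<omega>. g (xi2 1 1 \<omega>))"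
  using transfer_gen[OF meas_xi2[OF assms] meas_xi2[of 1 1] id2[OF assms], of g] by auto
lemma tre: fixes g :: "nat^2 \<Rightarrow> real" assumes "1 \<le> k"
  shows "(\<integral>\<omega>. g (eps k \<omega>) \<partial>M) = (\<integral>\<omega>. g (eps 1 \<omega>) \<partial>M)"
  "integrable M (\<lambda>\<omega>. g (eps k \<omega>)) \<longleftrightarrow> integrable M (\<lambda>\<omega>. g (eps 1 \<omega>))"
  using transfer_gen[OF meas_eps[OF assms] meas_eps[of 1] ideps[OF assms], of g] by auto

definition kindf :: "(nat^2 \<Rightarrow> real) \<Rightarrow> (nat^2 \<Rightarrow> real) \<Rightarrow> (nat^2 \<Rightarrow> real) \<Rightarrow> noise_idx \<Rightarrow> nat^2 \<Rightarrow> real" where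
  "kindf f1 f2 fe i = (case i of XiI _ _ i' \<Rightarrow> (if i' = 1 then f1 else f2) | EpsI _ \<Rightarrow> fe)"

lemma step_T:
  fixes f1 f2 fe :: "nat^2 \<Rightarrow> real" and B2 B4 :: real and a :: "nat^2"
  assumes l: "1 \<le> l"
    and i1: "integrable M (\<lambda>\<omega>. f1 (xi1 1 1 \<omega>) ^ 4)" and i2: "integrable M (\<lambda>\<omega>. f2 (xi2 1 1 \<omega>) ^ 4)"
    and ie: "integrable M (\<lambda>\<omega>. fe (eps 1 \<omega>) ^ 4)"
    and z1: "(\<integral>\<omega>. f1 (xi1 1 1 \<omega>) \<partial>M) = 0" and z2: "(\<integral>\<omega>. f2 (xi2 1 1 \<omega>) \<partial>M) = 0"
    and ze: "(\<integral>\<omega>. fe (eps 1 \<omega>) \<partial>M) = 0"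
    and b2: "(\<integral>\<omega>. f1 (xi1 1 1 \<omega>) ^ 2 \<partial>M) \<le> B2" "(\<integral>\<omega>. f2 (xi2 1 1 \<omega>) ^ 2 \<partial>M) \<le> B2"
       "(\<integral>\<omega>. fe (eps 1 \<omega>) ^ 2 \<partial>M) \<le> B2"
    and b4: "(\<integral>\<omega>. f1 (xi1 1 1 \<omega>) ^ 4 \<partial>M) \<le> B4" "(\<integral>\<omega>. f2 (xi2 1 1 \<omega>) ^ 4 \<partial>M) \<le> B4"
       "(\<integral>\<omega>. fe (eps 1 \<omega>) ^ 4 \<partial>M) \<le> B4"
    and B2: "0 \<le> B2"
  defines "T \<equiv> \<lambda>\<omega>. (\<Sum>j\<in>{1..a$1}. f1 (xi1 l j \<omega>)) + (\<Sum>j\<in>{1..a$2}. f2 (xi2 l j \<omega>)) + fe (eps l \<omega>)"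
  shows "integrable M (\<lambda>\<omega>. T \<omega> ^ 4) \<and> (\<integral>\<omega>. T \<omega> \<partial>M) = 0
       \<and> (\<integral>\<omega>. T \<omega> ^ 2 \<partial>M) = real (a$1) * (\<integral>\<omega>. f1 (xi1 1 1 \<omega>) ^ 2 \<partial>M)
            + real (a$2) * (\<integral>\<omega>. f2 (xi2 1 1 \<omega>) ^ 2 \<partial>M) + (\<integral>\<omega>. fe (eps 1 \<omega>) ^ 2 \<partial>M)
       \<and> (\<integral>\<omega>. T \<omega> ^ 4 \<partial>M) \<le> real (a$1 + a$2 + 1) * B4 + 3 * (real (a$1 + a$2 + 1))^2 * B2^2"
proof -
  define J1 where "J1 = (\<lambda>j. XiI l j 1) ` {1..a$1}"
  define J2 where "J2 = (\<lambda>j. XiI l j 2) ` {1..a$2}"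
  define J where "J = J1 \<union> J2 \<union> {EpsI l}"
  define Y where "Y i \<omega> = kindf f1 f2 fe i (noise_family xi1 xi2 eps i \<omega>)" for i \<omega>
  have Jsub: "J \<subseteq> noise_indices" using l unfolding J_def J1_def J2_def noise_indices_def by auto
  have finJ: "finite J" unfolding J_def J1_def J2_def by auto
  have indY: "indep_vars (\<lambda>_. borel) Y J"
    unfolding Y_def
    by (rule indep_vars_compose2[OF indep_vars_subset[OF indep Jsub]]) simp
  have inj1: "inj_on (\<lambda>j. XiI l j 1) {1..a$1}" by (auto simp: inj_on_def)
  have inj2: "inj_on (\<lambda>j. XiI l j 2) {1..a$2}" by (auto simp: inj_on_def)
  have d12: "J1 \<inter> J2 = {}" unfolding J1_def J2_def by auto
  have d3: "(J1 \<union> J2) \<inter> {EpsI l} = {}" unfolding J1_def J2_def by auto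
  have Yx1: "Y (XiI l j 1) \<omega> = f1 (xi1 l j \<omega>)" for j \<omega> by (simp add: Y_def kindf_def noise_family_def)
  have Yx2: "Y (XiI l j 2) \<omega> = f2 (xi2 l j \<omega>)" for j \<omega> by (simp add: Y_def kindf_def noise_family_def)
  have Ye: "Y (EpsI l) \<omega> = fe (eps l \<omega>)" for \<omega> by (simp add: Y_def kindf_def noise_family_def)
  have sumJ: "(\<Sum>i\<in>J. Y i \<omega>) = T \<omega>" for \<omega>
  proof -
    have "(\<Sum>i\<in>J. Y i \<omega>) = (\<Sum>i\<in>J1. Y i \<omega>) + (\<Sum>i\<in>J2. Y i \<omega>) + Y (EpsI l) \<omega>"
      unfolding J_def using d12 d3 by (simp add: sum.union_disjoint J1_def J2_def)
    also have "(\<Sum>i\<in>J1. Y i \<omega>) = (\<Sum>j\<in>{1..a$1}. f1 (xi1 l j \<omega>))"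
      unfolding J1_def by (subst sum.reindex[OF inj1]) (simp add: Yx1 del: One_nat_def)
    also have "(\<Sum>i\<in>J2. Y i \<omega>) = (\<Sum>j\<in>{1..a$2}. f2 (xi2 l j \<omega>))"
      unfolding J2_def by (subst sum.reindex[OF inj2]) (simp add: Yx2 del: One_nat_def)
    finally show ?thesis unfolding T_def Ye by simp
  qed
  have cardJ: "card J = a$1 + a$2 + 1"
  proof -
    have "card J = card (J1 \<union> J2) + 1" unfolding J_def using d3
      by (subst card_Un_disjoint) (auto simp: J1_def J2_def)
    also have "card (J1 \<union> J2) = card J1 + card J2" using d12
      by (subst card_Un_disjoint) (auto simp: J1_def J2_def)
    also have "card J1 = a$1" unfolding J1_def using card_image[OF inj1] by simp
    also have "card J2 = a$2" unfolding J2_def using card_image[OF inj2] by simp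
    finally show ?thesis .
  qed
  have Jcases: "i \<in> J \<Longrightarrow> (\<exists>j. 1 \<le> j \<and> i = XiI l j 1) \<or> (\<exists>j. 1 \<le> j \<and> i = XiI l j 2) \<or> i = EpsI l" for i
    unfolding J_def J1_def J2_def by auto
  have mom: "integrable M (\<lambda>x. Y i x ^ 4) \<and> (\<integral>x. Y i x \<partial>M) = 0 \<and> (\<integral>x. Y i x ^ 2 \<partial>M) \<le> B2 \<and> (\<integral>x. Y i x ^ 4 \<partial>M) \<le> B4"
    if "i \<in> J" for i
    using Jcases[OF that]
  proof (elim disjE exE conjE)
    fix j assume j: "1 \<le> j" "i = XiI l j 1"
    show ?thesis unfolding j(2) Yx1
      using tr1[OF l j(1), of "\<lambda>v. f1 v ^ 4"] tr1[OF l j(1), of "\<lambda>v. f1 v ^ 2"] tr1[OF l j(1), of f1]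
        i1 z1 b2 b4 by auto
  next
    fix j assume j: "1 \<le> j" "i = XiI l j 2"
    show ?thesis unfolding j(2) Yx2
      using tr2[OF l j(1), of "\<lambda>v. f2 v ^ 4"] tr2[OF l j(1), of "\<lambda>v. f2 v ^ 2"] tr2[OF l j(1), of f2]
        i2 z2 b2 b4 by auto
  next
    assume j: "i = EpsI l"
    show ?thesis unfolding j Ye
      using tre[OF l, of "\<lambda>v. fe v ^ 4"] tre[OF l, of "\<lambda>v. fe v ^ 2"] tre[OF l, of fe]
        ie ze b2 b4 by auto
  qed
  note R = indep_sum_moments[OF finJ indY, of B2 B4]
  have R': "integrable M (\<lambda>x. (\<Sum>i\<in>J. Y i x) ^ 4) \<and> (\<integral>x. (\<Sum>i\<in>J. Y i x) \<partial>M) = 0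
       \<and> (\<integral>x. (\<Sum>i\<in>J. Y i x) ^ 2 \<partial>M) = (\<Sum>i\<in>J. \<integral>x. Y i x ^ 2 \<partial>M)
       \<and> (\<integral>x. (\<Sum>i\<in>J. Y i x) ^ 4 \<partial>M) \<le> real (card J) * B4 + 3 * (real (card J))^2 * B2^2"
    by (rule R) (use mom B2 in auto)
  have S2: "(\<Sum>i\<in>J. \<integral>x. Y i x ^ 2 \<partial>M) = real (a$1) * (\<integral>\<omega>. f1 (xi1 1 1 \<omega>) ^ 2 \<partial>M)
            + real (a$2) * (\<integral>\<omega>. f2 (xi2 1 1 \<omega>) ^ 2 \<partial>M) + (\<integral>\<omega>. fe (eps 1 \<omega>) ^ 2 \<partial>M)"
  proof -
    have "(\<Sum>i\<in>J. \<integral>x. Y i x ^ 2 \<partial>M) = (\<Sum>i\<in>J1. \<integral>x. Y i x ^ 2 \<partial>M) + (\<Sum>i\<in>J2. \<integral>x. Y i x ^ 2 \<partial>M) + (\<integral>x. Y (EpsI l) x ^ 2 \<partial>M)"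
      unfolding J_def using d12 d3 by (simp add: sum.union_disjoint J1_def J2_def)
    also have "(\<Sum>i\<in>J1. \<integral>x. Y i x ^ 2 \<partial>M) = (\<Sum>j\<in>{1..a$1}. \<integral>\<omega>. f1 (xi1 1 1 \<omega>) ^ 2 \<partial>M)"
    proof -
      have "(\<Sum>i\<in>J1. \<integral>x. Y i x ^ 2 \<partial>M) = (\<Sum>j\<in>{1..a$1}. \<integral>\<omega>. f1 (xi1 l j \<omega>) ^ 2 \<partial>M)"
        unfolding J1_def by (subst sum.reindex[OF inj1]) (simp add: Yx1 del: One_nat_def)
      also have "\<dots> = (\<Sum>j\<in>{1..a$1}. \<integral>\<omega>. f1 (xi1 1 1 \<omega>) ^ 2 \<partial>M)"
        by (rule sum.cong[OF refl]) (use tr1(1)[OF l, of _ "\<lambda>v. f1 v ^ 2"] in auto)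
      finally show ?thesis .
    qed
    also have "(\<Sum>i\<in>J2. \<integral>x. Y i x ^ 2 \<partial>M) = (\<Sum>j\<in>{1..a$2}. \<integral>\<omega>. f2 (xi2 1 1 \<omega>) ^ 2 \<partial>M)"
    proof -
      have "(\<Sum>i\<in>J2. \<integral>x. Y i x ^ 2 \<partial>M) = (\<Sum>j\<in>{1..a$2}. \<integral>\<omega>. f2 (xi2 l j \<omega>) ^ 2 \<partial>M)"
        unfolding J2_def by (subst sum.reindex[OF inj2]) (simp add: Yx2 del: One_nat_def)
      also have "\<dots> = (\<Sum>j\<in>{1..a$2}. \<integral>\<omega>. f2 (xi2 1 1 \<omega>) ^ 2 \<partial>M)"
        by (rule sum.cong[OF refl]) (use tr2(1)[OF l, of _ "\<lambda>v. f2 v ^ 2"] in auto)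
      finally show ?thesis .
    qed
    also have "(\<integral>x. Y (EpsI l) x ^ 2 \<partial>M) = (\<integral>\<omega>. fe (eps 1 \<omega>) ^ 2 \<partial>M)"
      using tre(1)[OF l, of "\<lambda>v. fe v ^ 2"] by (simp add: Ye del: One_nat_def)
    finally show ?thesis by simp
  qed
  show ?thesis using R' unfolding sumJ S2 cardJ by simp
qed

end

lemma pow4_sum_le: "0 \<le> x \<Longrightarrow> 0 \<le> y \<Longrightarrow> ((x::real) + y) ^ 4 \<le> 8 * (x ^ 4 + y ^ 4)"
proof -
  assume "0 \<le> x" "0 \<le> y"
  have a: "(x + y)^2 \<le> 2 * (x^2 + y^2)" using sum_squares_ge_zero[of "x - y" 0]
    by (simp add: power2_eq_square algebra_simps)
  have "(x+y)^4 = ((x+y)^2)^2" by simp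
  also have "\<dots> \<le> (2 * (x^2 + y^2))^2" by (rule power_mono[OF a]) simp
  also have "\<dots> = 4 * (x^2+y^2)^2" by (simp add: power2_eq_square algebra_simps)
  also have "\<dots> \<le> 8 * (x^4+y^4)"
  proof -
    have "0 \<le> (x^2 - y^2)^2" by simp
    then show ?thesis by (simp add: power2_eq_square power4_eq_xxxx algebra_simps)
  qed
  finally show ?thesis .
qed

definition vd :: "nat^2 \<Rightarrow> real" where "vd v = real (v$1) - real (v$2)"
definition us :: "nat^2 \<Rightarrow> real" where "us v = real (v$1) + real (v$2)"

lemma vd_bound: "\<bar>vd v\<bar> \<le> 2 * norm (vreal v)"
proof -
  have "\<bar>vreal v $ i\<bar> \<le> norm (vreal v)" for i by (rule component_le_norm_cart)
  then have "\<bar>real (v$i)\<bar> \<le> norm (vreal v)" for i by (simp add: vreal_def)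
  from this[of 1] this[of 2] show ?thesis unfolding vd_def by linarith
qed
lemma us_bound: "\<bar>us v\<bar> \<le> 2 * norm (vreal v)"
proof -
  have "\<bar>vreal v $ i\<bar> \<le> norm (vreal v)" for i by (rule component_le_norm_cart)
  then have "\<bar>real (v$i)\<bar> \<le> norm (vreal v)" for i by (simp add: vreal_def)
  from this[of 1] this[of 2] show ?thesis unfolding us_def by linarith
qed

lemma vd_sum: "vd (\<Sum>j\<in>S. f j) = (\<Sum>j\<in>S. vd (f j))"
  by (simp add: vd_def sum_subtractf)
lemma us_sum: "us (\<Sum>j\<in>S. f j) = (\<Sum>j\<in>S. us (f j))"
  by (simp add: us_def sum.distrib)
lemma vd_add: "vd (x + y) = vd x + vd y" by (simp add: vd_def)
lemma us_add: "us (x + y) = us x + us y" by (simp add: us_def)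

lemma vd_stepF: "vd (stepF l a g) = (\<Sum>j\<in>{1..a$1}. vd (g (XiI l j 1))) + (\<Sum>j\<in>{1..a$2}. vd (g (XiI l j 2))) + vd (g (EpsI l))"
  by (simp add: stepF.simps vd_add vd_sum)
lemma us_stepF: "us (stepF l a g) = (\<Sum>j\<in>{1..a$1}. us (g (XiI l j 1))) + (\<Sum>j\<in>{1..a$2}. us (g (XiI l j 2))) + us (g (EpsI l))"
  by (simp add: stepF.simps us_add us_sum)

context prob_space begin

lemma mom_helper:
  fixes X :: "'a \<Rightarrow> nat^2" and L :: "nat^2 \<Rightarrow> real"
  assumes Xm: "X \<in> measurable M (count_space UNIV)"
    and i8: "integrable M (\<lambda>\<omega>. norm (vreal (X \<omega>)) ^ 8)"
    and Lb: "\<And>v. \<bar>L v\<bar> \<le> 2 * norm (vreal v)"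
  shows "integrable M (\<lambda>\<omega>. (L (X \<omega>) - c) ^ 4)"
proof -
  have m: "(\<lambda>\<omega>. norm (vreal (X \<omega>))) \<in> borel_measurable M"
    using measurable_compose[OF Xm, of "\<lambda>v. norm (vreal v)" borel] by simp
  have i4: "integrable M (\<lambda>\<omega>. norm (vreal (X \<omega>)) ^ 4)"
  proof -
    have "integrable M (\<lambda>\<omega>. (norm (vreal (X \<omega>)) ^ 2) ^ 4)" using i8 by (simp add: power_mult[symmetric])
    then have "integrable M (\<lambda>\<omega>. (norm (vreal (X \<omega>)) ^ 2) ^ 2)"
      by (rule int_pow_le4[rotated]) (use m in auto)
    then show ?thesis by (simp add: power_mult[symmetric])
  qed
  show ?thesis
  proof (rule Bochner_Integration.integrable_bound[of _ "\<lambda>\<omega>. 8 * (16 * norm (vreal (X \<omega>)) ^ 4 + \<bar>c\<bar> ^ 4)"])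
    show "integrable M (\<lambda>\<omega>. 8 * (16 * norm (vreal (X \<omega>)) ^ 4 + \<bar>c\<bar> ^ 4))" using i4 by simp
    show "(\<lambda>\<omega>. (L (X \<omega>) - c) ^ 4) \<in> borel_measurable M"
      using measurable_compose[OF Xm, of "\<lambda>v. (L v - c) ^ 4" borel] by simp
    show "AE \<omega> in M. norm ((L (X \<omega>) - c) ^ 4) \<le> norm (8 * (16 * norm (vreal (X \<omega>)) ^ 4 + \<bar>c\<bar> ^ 4))"
    proof (rule AE_I2)
      fix \<omega>
      let ?n = "norm (vreal (X \<omega>))"
      have "\<bar>L (X \<omega>) - c\<bar> \<le> 2 * ?n + \<bar>c\<bar>" using Lb[of "X \<omega>"] by linarith
      then have "\<bar>L (X \<omega>) - c\<bar> ^ 4 \<le> (2 * ?n + \<bar>c\<bar>) ^ 4" by (rule power_mono) simp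
      also have "\<dots> \<le> 8 * ((2 * ?n) ^ 4 + \<bar>c\<bar> ^ 4)" by (rule pow4_sum_le) auto
      finally have "\<bar>L (X \<omega>) - c\<bar> ^ 4 \<le> 8 * (16 * ?n ^ 4 + \<bar>c\<bar> ^ 4)" by (simp add: power_mult_distrib)
      then show "norm ((L (X \<omega>) - c) ^ 4) \<le> norm (8 * (16 * ?n ^ 4 + \<bar>c\<bar> ^ 4))"
        by (simp add: power_abs)
    qed
  qed
qed

lemma vec_mean:
  fixes X :: "'a \<Rightarrow> nat^2"
  assumes Xm: "X \<in> measurable M (count_space UNIV)"
    and i8: "integrable M (\<lambda>\<omega>. norm (vreal (X \<omega>)) ^ 8)"
  shows "integrable M (\<lambda>\<omega>. vreal (X \<omega>))"
    "(\<integral>\<omega>. real (X \<omega> $ i) \<partial>M) = (\<integral>\<omega>. vreal (X \<omega>) \<partial>M) $ i"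
proof -
  show iv: "integrable M (\<lambda>\<omega>. vreal (X \<omega>))"
  proof (rule Bochner_Integration.integrable_bound[of _ "\<lambda>\<omega>. 1 + norm (vreal (X \<omega>)) ^ 8"])
    show "integrable M (\<lambda>\<omega>. 1 + norm (vreal (X \<omega>)) ^ 8)" using i8 by simp
    show "(\<lambda>\<omega>. vreal (X \<omega>)) \<in> borel_measurable M"
      using measurable_compose[OF Xm, of vreal borel] by simp
    show "AE \<omega> in M. norm (vreal (X \<omega>)) \<le> norm (1 + norm (vreal (X \<omega>)) ^ 8)"
    proof (rule AE_I2)
      fix \<omega>
      let ?n = "norm (vreal (X \<omega>))"
      have "?n \<le> 1 + ?n ^ 8"
      proof (cases "?n \<le> 1")
        case True then show ?thesis by (smt (verit) norm_ge_zero zero_le_power)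
      next
        case False then have "?n ^ 1 \<le> ?n ^ 8" by (intro power_increasing) auto
        then show ?thesis by simp
      qed
      then show "norm (vreal (X \<omega>)) \<le> norm (1 + norm (vreal (X \<omega>)) ^ 8)" by simp
    qed
  qed
  have "(\<integral>\<omega>. vreal (X \<omega>) $ i \<partial>M) = (\<integral>\<omega>. vreal (X \<omega>) \<partial>M) $ i"
    using integral_bounded_linear[OF bounded_linear_vec_nth iv, of i] by (simp add: comp_def)
  then show "(\<integral>\<omega>. real (X \<omega> $ i) \<partial>M) = (\<integral>\<omega>. vreal (X \<omega>) \<partial>M) $ i"
    by (simp add: vreal_def)
qed

end

context bp begin

lemma comp_int:
  assumes Xm: "X \<in> measurable M (count_space UNIV)"
    and i8: "integrable M (\<lambda>\<omega>. norm (vreal (X \<omega>)) ^ 8)"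
  shows "integrable M (\<lambda>\<omega>. real (X \<omega> $ i))"
  using integrable_bounded_linear[OF bounded_linear_vec_nth vec_mean(1)[OF Xm i8], of i]
  by (simp add: vreal_def)

lemma meas11: "xi1 1 1 \<in> measurable M (count_space UNIV)" "xi2 1 1 \<in> measurable M (count_space UNIV)"
  "eps 1 \<in> measurable M (count_space UNIV)" by (auto intro: meas_xi1 meas_xi2 meas_eps)

lemma mean_vd1: "(\<integral>\<omega>. vd (xi1 1 1 \<omega>) \<partial>M) = \<alpha> - \<beta>"
  unfolding vd_def
  using vec_mean(2)[OF meas11(1) mom1, of 1] vec_mean(2)[OF meas11(1) mom1, of 2] mean1
    comp_int[OF meas11(1) mom1, of 1] comp_int[OF meas11(1) mom1, of 2] by simp
lemma mean_vd2: "(\<integral>\<omega>. vd (xi2 1 1 \<omega>) \<partial>M) = -(\<alpha> - \<beta>)"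
  unfolding vd_def
  using vec_mean(2)[OF meas11(2) mom2, of 1] vec_mean(2)[OF meas11(2) mom2, of 2] mean2
    comp_int[OF meas11(2) mom2, of 1] comp_int[OF meas11(2) mom2, of 2] by simp
lemma mean_us1: "(\<integral>\<omega>. us (xi1 1 1 \<omega>) \<partial>M) = 1"
  unfolding us_def
  using vec_mean(2)[OF meas11(1) mom1, of 1] vec_mean(2)[OF meas11(1) mom1, of 2] mean1 ab(5)
    comp_int[OF meas11(1) mom1, of 1] comp_int[OF meas11(1) mom1, of 2] by simp
lemma mean_us2: "(\<integral>\<omega>. us (xi2 1 1 \<omega>) \<partial>M) = 1"
  unfolding us_def
  using vec_mean(2)[OF meas11(2) mom2, of 1] vec_mean(2)[OF meas11(2) mom2, of 2] mean2 ab(5)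
    comp_int[OF meas11(2) mom2, of 1] comp_int[OF meas11(2) mom2, of 2] by simp

lemma NS_simps: "NS \<omega> (XiI l j 1) = xi1 l j \<omega>" "NS \<omega> (XiI l j 2) = xi2 l j \<omega>" "NS \<omega> (EpsI l) = eps l \<omega>"
  by (auto simp: NS_def noise_family_def)

lemma int24:
  fixes f :: "'a \<Rightarrow> real"
  assumes "f \<in> borel_measurable M" "integrable M (\<lambda>x. f x ^ 4)"
  shows "integrable M f" "integrable M (\<lambda>x. f x ^ 2)"
  using int_pow_le4[OF assms, of 1] int_pow_le4[OF assms, of 2] by auto

lemma step_L:
  fixes L :: "nat^2 \<Rightarrow> real" and a :: "nat^2"
  assumes Lb: "\<And>v. \<bar>L v\<bar> \<le> 2 * norm (vreal v)"
    and Lstep: "\<And>l a g. L (stepF l a g) = (\<Sum>j\<in>{1..a$1}. L (g (XiI l j 1))) + (\<Sum>j\<in>{1..a$2}. L (g (XiI l j 2))) + L (g (EpsI l))"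
    and l: "1 \<le> l"
  defines "m1 \<equiv> (\<integral>\<omega>. L (xi1 1 1 \<omega>) \<partial>M)" and "m2 \<equiv> (\<integral>\<omega>. L (xi2 1 1 \<omega>) \<partial>M)"
    and "me \<equiv> (\<integral>\<omega>. L (eps 1 \<omega>) \<partial>M)"
  defines "q1 \<equiv> (\<integral>\<omega>. (L (xi1 1 1 \<omega>) - m1) ^ 2 \<partial>M)" and "q2 \<equiv> (\<integral>\<omega>. (L (xi2 1 1 \<omega>) - m2) ^ 2 \<partial>M)"
    and "qe \<equiv> (\<integral>\<omega>. (L (eps 1 \<omega>) - me) ^ 2 \<partial>M)"
  defines "r1 \<equiv> (\<integral>\<omega>. (L (xi1 1 1 \<omega>) - m1) ^ 4 \<partial>M)" and "r2 \<equiv> (\<integral>\<omega>. (L (xi2 1 1 \<omega>) - m2) ^ 4 \<partial>M)"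
    and "re \<equiv> (\<integral>\<omega>. (L (eps 1 \<omega>) - me) ^ 4 \<partial>M)"
  defines "G \<equiv> \<lambda>\<omega>. L (stepF l a (NS \<omega>)) - (real (a$1) * m1 + real (a$2) * m2 + me)"
  shows "integrable M (\<lambda>\<omega>. G \<omega> ^ 4) \<and> (\<integral>\<omega>. G \<omega> \<partial>M) = 0
       \<and> (\<integral>\<omega>. G \<omega> ^ 2 \<partial>M) = real (a$1) * q1 + real (a$2) * q2 + qe
       \<and> (\<integral>\<omega>. G \<omega> ^ 4 \<partial>M) \<le> (r1 + r2 + re + 3 * (q1 + q2 + qe)^2) * (real (a$1) + real (a$2) + 1)^2"
proof -
  have i1: "integrable M (\<lambda>\<omega>. (L (xi1 1 1 \<omega>) - m1) ^ 4)" by (rule mom_helper[OF meas11(1) mom1 Lb])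
  have i2: "integrable M (\<lambda>\<omega>. (L (xi2 1 1 \<omega>) - m2) ^ 4)" by (rule mom_helper[OF meas11(2) mom2 Lb])
  have ie: "integrable M (\<lambda>\<omega>. (L (eps 1 \<omega>) - me) ^ 4)" by (rule mom_helper[OF meas11(3) mom3 Lb])
  have mm1: "(\<lambda>\<omega>. L (xi1 1 1 \<omega>) - m1) \<in> borel_measurable M"
    using measurable_compose[OF meas11(1), of "\<lambda>v. L v - m1" borel] by simp
  have mm2: "(\<lambda>\<omega>. L (xi2 1 1 \<omega>) - m2) \<in> borel_measurable M"
    using measurable_compose[OF meas11(2), of "\<lambda>v. L v - m2" borel] by simp
  have mme: "(\<lambda>\<omega>. L (eps 1 \<omega>) - me) \<in> borel_measurable M"
    using measurable_compose[OF meas11(3), of "\<lambda>v. L v - me" borel] by simp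
  have z1: "(\<integral>\<omega>. L (xi1 1 1 \<omega>) - m1 \<partial>M) = 0"
  proof -
    have "integrable M (\<lambda>\<omega>. (L (xi1 1 1 \<omega>) - m1) + m1)"
      using int24(1)[OF mm1 i1] by (intro Bochner_Integration.integrable_add) auto
    then have "integrable M (\<lambda>\<omega>. L (xi1 1 1 \<omega>))" by simp
    then show ?thesis unfolding m1_def by (simp add: prob_space)
  qed
  have z2: "(\<integral>\<omega>. L (xi2 1 1 \<omega>) - m2 \<partial>M) = 0"
  proof -
    have "integrable M (\<lambda>\<omega>. (L (xi2 1 1 \<omega>) - m2) + m2)"
      using int24(1)[OF mm2 i2] by (intro Bochner_Integration.integrable_add) auto
    then have "integrable M (\<lambda>\<omega>. L (xi2 1 1 \<omega>))" by simp
    then show ?thesis unfolding m2_def by (simp add: prob_space)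
  qed
  have ze: "(\<integral>\<omega>. L (eps 1 \<omega>) - me \<partial>M) = 0"
  proof -
    have "integrable M (\<lambda>\<omega>. (L (eps 1 \<omega>) - me) + me)"
      using int24(1)[OF mme ie] by (intro Bochner_Integration.integrable_add) auto
    then have "integrable M (\<lambda>\<omega>. L (eps 1 \<omega>))" by simp
    then show ?thesis unfolding me_def by (simp add: prob_space)
  qed
  have q1p: "0 \<le> q1" unfolding q1_def by (rule integral_nonneg_AE) auto
  have q2p: "0 \<le> q2" unfolding q2_def by (rule integral_nonneg_AE) auto
  have qep: "0 \<le> qe" unfolding qe_def by (rule integral_nonneg_AE) auto
  have r1p: "0 \<le> r1" unfolding r1_def by (rule integral_nonneg_AE) auto
  have r2p: "0 \<le> r2" unfolding r2_def by (rule integral_nonneg_AE) auto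
  have rep: "0 \<le> re" unfolding re_def by (rule integral_nonneg_AE) auto
  have b21: "(\<integral>\<omega>. (L (xi1 1 1 \<omega>) - m1) ^ 2 \<partial>M) \<le> q1+q2+qe" using q2p qep unfolding q1_def by simp
  have b22: "(\<integral>\<omega>. (L (xi2 1 1 \<omega>) - m2) ^ 2 \<partial>M) \<le> q1+q2+qe" using q1p qep unfolding q2_def by simp
  have b2e: "(\<integral>\<omega>. (L (eps 1 \<omega>) - me) ^ 2 \<partial>M) \<le> q1+q2+qe" using q1p q2p unfolding qe_def by simp
  have b41: "(\<integral>\<omega>. (L (xi1 1 1 \<omega>) - m1) ^ 4 \<partial>M) \<le> r1+r2+re" using r2p rep unfolding r1_def by simp
  have b42: "(\<integral>\<omega>. (L (xi2 1 1 \<omega>) - m2) ^ 4 \<partial>M) \<le> r1+r2+re" using r1p rep unfolding r2_def by simp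
  have b4e: "(\<integral>\<omega>. (L (eps 1 \<omega>) - me) ^ 4 \<partial>M) \<le> r1+r2+re" using r1p r2p unfolding re_def by simp
  have Bp: "0 \<le> q1+q2+qe" using q1p q2p qep by simp
  note T = step_T[OF l i1 i2 ie z1 z2 ze b21 b22 b2e b41 b42 b4e Bp, of a]
  have T': "integrable M (\<lambda>\<omega>. ((\<Sum>j\<in>{1..a$1}. L (xi1 l j \<omega>) - m1) + (\<Sum>j\<in>{1..a$2}. L (xi2 l j \<omega>) - m2) + (L (eps l \<omega>) - me)) ^ 4)
     \<and> (\<integral>\<omega>. ((\<Sum>j\<in>{1..a$1}. L (xi1 l j \<omega>) - m1) + (\<Sum>j\<in>{1..a$2}. L (xi2 l j \<omega>) - m2) + (L (eps l \<omega>) - me)) \<partial>M) = 0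
     \<and> (\<integral>\<omega>. ((\<Sum>j\<in>{1..a$1}. L (xi1 l j \<omega>) - m1) + (\<Sum>j\<in>{1..a$2}. L (xi2 l j \<omega>) - m2) + (L (eps l \<omega>) - me)) ^ 2 \<partial>M)
        = real (a$1) * q1 + real (a$2) * q2 + qe
     \<and> (\<integral>\<omega>. ((\<Sum>j\<in>{1..a$1}. L (xi1 l j \<omega>) - m1) + (\<Sum>j\<in>{1..a$2}. L (xi2 l j \<omega>) - m2) + (L (eps l \<omega>) - me)) ^ 4 \<partial>M)
        \<le> real (a$1 + a$2 + 1) * (r1+r2+re) + 3 * (real (a$1 + a$2 + 1))^2 * (q1+q2+qe)^2"
    using T by (simp add: q1_def q2_def qe_def)
  have Geq: "G \<omega> = (\<Sum>j\<in>{1..a$1}. L (xi1 l j \<omega>) - m1) + (\<Sum>j\<in>{1..a$2}. L (xi2 l j \<omega>) - m2) + (L (eps l \<omega>) - me)" for \<omega>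
    unfolding G_def Lstep NS_simps by (simp add: sum_subtractf)
  have n1: "1 \<le> real (a$1 + a$2 + 1)" by simp
  have "real (a$1 + a$2 + 1) * (r1+r2+re) \<le> (real (a$1 + a$2 + 1))^2 * (r1+r2+re)"
    using n1 r1p r2p rep by (intro mult_right_mono) (auto simp: power2_eq_square)
  then have b: "real (a$1 + a$2 + 1) * (r1+r2+re) + 3 * (real (a$1 + a$2 + 1))^2 * (q1+q2+qe)^2
      \<le> (r1 + r2 + re + 3 * (q1 + q2 + qe)^2) * (real (a$1) + real (a$2) + 1)^2"
    by (simp add: algebra_simps)
  show ?thesis unfolding Geq using T' b by linarith
qed

end

lemma pow4_sum_le_abs: "((x::real) + y) ^ 4 \<le> 8 * (x ^ 4 + y ^ 4)"
proof -
  have "(x + y) ^ 4 = \<bar>x + y\<bar> ^ 4" by (simp add: power_even_abs_numeral)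
  also have "\<dots> \<le> (\<bar>x\<bar> + \<bar>y\<bar>) ^ 4" by (rule power_mono) auto
  also have "\<dots> \<le> 8 * (\<bar>x\<bar> ^ 4 + \<bar>y\<bar> ^ 4)" by (rule pow4_sum_le) auto
  finally show ?thesis by (simp add: power_even_abs_numeral)
qed

lemma abs_prod_sq: "\<bar>(x::real) * y\<bar> \<le> (x^2 + y^2) / 2"
proof -
  have "0 \<le> (\<bar>x\<bar> - \<bar>y\<bar>)^2" by simp
  then show ?thesis by (simp add: power2_eq_square algebra_simps abs_mult)
qed
lemma sq_avg: "((A::real) + B)^2 / 4 \<le> (A^2 + B^2)/2"
proof -
  have "0 \<le> (A - B)^2" by simp
  then show ?thesis by (simp add: power2_eq_square algebra_simps)
qed
lemma abs_prod4: "\<bar>(a::real) * b * c * d\<bar> \<le> a^4 + b^4 + c^4 + d^4"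
proof -
  have 1: "\<bar>a * b\<bar> \<le> (a^2 + b^2)/2" by (rule abs_prod_sq)
  have 2: "\<bar>c * d\<bar> \<le> (c^2 + d^2)/2" by (rule abs_prod_sq)
  have "\<bar>a * b * c * d\<bar> = \<bar>a*b\<bar> * \<bar>c*d\<bar>" by (simp add: abs_mult)
  also have "\<dots> \<le> ((a^2 + b^2)/2) * ((c^2 + d^2)/2)" by (rule mult_mono[OF 1 2]) auto
  also have "\<dots> \<le> (((a^2 + b^2)/2)^2 + ((c^2 + d^2)/2)^2) / 2"
    using abs_prod_sq[of "(a^2 + b^2)/2" "(c^2 + d^2)/2"] by simp
  also have "\<dots> = ((a^2 + b^2)^2/4 + (c^2 + d^2)^2/4) / 2" by (simp add: power_divide)
  also have "\<dots> \<le> ((a^4 + b^4)/2 + (c^4 + d^4)/2) / 2"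
  proof -
    have x: "(a^2 + b^2)^2/4 \<le> (a^4 + b^4)/2" using sq_avg[of "a^2" "b^2"] by (simp add: power_mult[symmetric])
    have y: "(c^2 + d^2)^2/4 \<le> (c^4 + d^4)/2" using sq_avg[of "c^2" "d^2"] by (simp add: power_mult[symmetric])
    from x y show ?thesis by (intro divide_right_mono add_mono) auto
  qed
  also have "\<dots> \<le> a^4 + b^4 + c^4 + d^4"
  proof -
    have "0 \<le> a^4" "0 \<le> b^4" "0 \<le> c^4" "0 \<le> d^4" by auto
    then show ?thesis by (simp add: field_simps)
  qed
  finally show ?thesis .
qed

context prob_space begin

definition L4 :: "('a \<Rightarrow> real) \<Rightarrow> bool" where
  "L4 f \<longleftrightarrow> f \<in> borel_measurable M \<and> integrable M (\<lambda>x. f x ^ 4)"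

lemma L4_const[simp]: "L4 (\<lambda>_. c)" unfolding L4_def by simp

lemma L4_add: "L4 f \<Longrightarrow> L4 g \<Longrightarrow> L4 (\<lambda>x. f x + g x)"
  unfolding L4_def
proof safe
  assume m: "f \<in> borel_measurable M" "g \<in> borel_measurable M" and i: "integrable M (\<lambda>x. f x ^ 4)" "integrable M (\<lambda>x. g x ^ 4)"
  show "(\<lambda>x. f x + g x) \<in> borel_measurable M" using m by simp
  show "integrable M (\<lambda>x. (f x + g x) ^ 4)"
  proof (rule Bochner_Integration.integrable_bound[of _ "\<lambda>x. 8 * (f x ^ 4 + g x ^ 4)"])
    show "integrable M (\<lambda>x. 8 * (f x ^ 4 + g x ^ 4))" using i by simp
    show "(\<lambda>x. (f x + g x) ^ 4) \<in> borel_measurable M" using m by simp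
    show "AE x in M. norm ((f x + g x) ^ 4) \<le> norm (8 * (f x ^ 4 + g x ^ 4))"
    proof (rule AE_I2)
      fix x
      have b: "norm ((f x + g x) ^ 4) = (f x + g x) ^ 4" "norm (8 * (f x ^ 4 + g x ^ 4)) = 8 * (f x ^ 4 + g x ^ 4)"
        by simp_all
      show "norm ((f x + g x) ^ 4) \<le> norm (8 * (f x ^ 4 + g x ^ 4))" unfolding b by (rule pow4_sum_le_abs)
    qed
  qed
qed

lemma L4_cmult: "L4 f \<Longrightarrow> L4 (\<lambda>x. c * f x)"
  unfolding L4_def by (auto simp: power_mult_distrib)

lemma L4_minus: "L4 f \<Longrightarrow> L4 g \<Longrightarrow> L4 (\<lambda>x. f x - g x)"
  using L4_add[of f "\<lambda>x. -1 * g x"] L4_cmult[of g "-1"] by simp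

lemma L4_dom:
  assumes f: "L4 f" and gm: "g \<in> borel_measurable M" and le: "\<And>x. \<bar>g x\<bar> \<le> \<bar>f x\<bar>"
  shows "L4 g"
proof -
  have i: "integrable M (\<lambda>x. f x ^ 4)" using f by (simp add: L4_def)
  have "integrable M (\<lambda>x. g x ^ 4)"
  proof (rule Bochner_Integration.integrable_bound[OF i])
    show "(\<lambda>x. g x ^ 4) \<in> borel_measurable M" using gm by simp
    show "AE x in M. norm (g x ^ 4) \<le> norm (f x ^ 4)"
    proof (rule AE_I2)
      fix x
      have a: "\<bar>g x\<bar> ^ 4 \<le> \<bar>f x\<bar> ^ 4" by (rule power_mono[OF le]) simp
      have b: "norm (g x ^ 4) = \<bar>g x\<bar> ^ 4" "norm (f x ^ 4) = \<bar>f x\<bar> ^ 4"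
        by (simp_all only: real_norm_def power_abs)
      show "norm (g x ^ 4) \<le> norm (f x ^ 4)" unfolding b by (rule a)
    qed
  qed
  then show ?thesis using gm by (simp add: L4_def)
qed

lemma L4_int4: "L4 a \<Longrightarrow> L4 b \<Longrightarrow> L4 c \<Longrightarrow> L4 d \<Longrightarrow> integrable M (\<lambda>x. a x * b x * c x * d x)"
  unfolding L4_def
proof (elim conjE)
  assume m: "a \<in> borel_measurable M" "b \<in> borel_measurable M" "c \<in> borel_measurable M" "d \<in> borel_measurable M"
    and i: "integrable M (\<lambda>x. a x ^ 4)" "integrable M (\<lambda>x. b x ^ 4)" "integrable M (\<lambda>x. c x ^ 4)" "integrable M (\<lambda>x. d x ^ 4)"
  show ?thesis
  proof (rule Bochner_Integration.integrable_bound[of _ "\<lambda>x. a x ^ 4 + b x ^ 4 + c x ^ 4 + d x ^ 4"])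
    show "integrable M (\<lambda>x. a x ^ 4 + b x ^ 4 + c x ^ 4 + d x ^ 4)" using i by simp
    show "(\<lambda>x. a x * b x * c x * d x) \<in> borel_measurable M" using m by simp
    show "AE x in M. norm (a x * b x * c x * d x) \<le> norm (a x ^ 4 + b x ^ 4 + c x ^ 4 + d x ^ 4)"
    proof (rule AE_I2)
      fix x
      have "0 \<le> a x ^ 4 + b x ^ 4 + c x ^ 4 + d x ^ 4" by simp
      then show "norm (a x * b x * c x * d x) \<le> norm (a x ^ 4 + b x ^ 4 + c x ^ 4 + d x ^ 4)"
        using abs_prod4[of "a x" "b x" "c x" "d x"] by (simp only: real_norm_def)
    qed
  qed
qed

lemma L4_int: "L4 a \<Longrightarrow> integrable M a"
  "L4 a \<Longrightarrow> integrable M (\<lambda>x. a x ^ 2)" "L4 a \<Longrightarrow> integrable M (\<lambda>x. a x ^ 4)"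
  unfolding L4_def using int_pow_le4[of a 1] int_pow_le4[of a 2] by auto

end

context bp begin

definition "lam = \<alpha> - \<beta>"
definition "de = (\<integral>\<omega>. vd (eps 1 \<omega>) \<partial>M)"
definition "ce = (\<integral>\<omega>. us (eps 1 \<omega>) \<partial>M)"
definition "s1 = (\<integral>\<omega>. (vd (xi1 1 1 \<omega>) - lam) ^ 2 \<partial>M)"
definition "s2 = (\<integral>\<omega>. (vd (xi2 1 1 \<omega>) - (-lam)) ^ 2 \<partial>M)"
definition "se = (\<integral>\<omega>. (vd (eps 1 \<omega>) - de) ^ 2 \<partial>M)"
definition "Kv4 = (\<integral>\<omega>. (vd (xi1 1 1 \<omega>) - lam) ^ 4 \<partial>M) + (\<integral>\<omega>. (vd (xi2 1 1 \<omega>) - (-lam)) ^ 4 \<partial>M)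
   + (\<integral>\<omega>. (vd (eps 1 \<omega>) - de) ^ 4 \<partial>M) + 3 * (s1 + s2 + se)^2"
definition "qu1 = (\<integral>\<omega>. (us (xi1 1 1 \<omega>) - 1) ^ 2 \<partial>M)"
definition "qu2 = (\<integral>\<omega>. (us (xi2 1 1 \<omega>) - 1) ^ 2 \<partial>M)"
definition "que = (\<integral>\<omega>. (us (eps 1 \<omega>) - ce) ^ 2 \<partial>M)"
definition "Ku4 = (\<integral>\<omega>. (us (xi1 1 1 \<omega>) - 1) ^ 4 \<partial>M) + (\<integral>\<omega>. (us (xi2 1 1 \<omega>) - 1) ^ 4 \<partial>M)
   + (\<integral>\<omega>. (us (eps 1 \<omega>) - ce) ^ 4 \<partial>M) + 3 * (qu1 + qu2 + que)^2"

lemma vd_us_comp: "real (a$1) = (us a + vd a)/2" "real (a$2) = (us a - vd a)/2"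
  by (auto simp: us_def vd_def)

lemma PhiV:
  fixes a :: "nat^2"
  assumes l: "1 \<le> l"
  defines "G \<equiv> \<lambda>\<omega>. vd (stepF l a (NS \<omega>)) - (lam * vd a + de)"
  shows "integrable M (\<lambda>\<omega>. G \<omega> ^ 4) \<and> (\<integral>\<omega>. G \<omega> \<partial>M) = 0
       \<and> (\<integral>\<omega>. G \<omega> ^ 2 \<partial>M) = real (a$1) * s1 + real (a$2) * s2 + se
       \<and> (\<integral>\<omega>. G \<omega> ^ 4 \<partial>M) \<le> Kv4 * (us a + 1)^2"
proof -
  note S = step_L[OF vd_bound vd_stepF l, of a, unfolded mean_vd1 mean_vd2 de_def[symmetric] lam_def[symmetric]
     s1_def[symmetric] s2_def[symmetric] se_def[symmetric] Kv4_def[symmetric]]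
  have eq: "real (a $ 1) * lam + real (a $ 2) * - lam + de = lam * vd a + de"
    by (simp add: vd_def algebra_simps)
  have u: "real (a$1) + real (a$2) + 1 = us a + 1" by (simp add: us_def)
  show ?thesis using S unfolding G_def eq u by (simp only: mult.commute)
qed

lemma PhiU:
  fixes a :: "nat^2"
  assumes l: "1 \<le> l"
  defines "G \<equiv> \<lambda>\<omega>. us (stepF l a (NS \<omega>)) - (us a + ce)"
  shows "integrable M (\<lambda>\<omega>. G \<omega> ^ 4) \<and> (\<integral>\<omega>. G \<omega> \<partial>M) = 0
       \<and> (\<integral>\<omega>. G \<omega> ^ 2 \<partial>M) = real (a$1) * qu1 + real (a$2) * qu2 + que
       \<and> (\<integral>\<omega>. G \<omega> ^ 4 \<partial>M) \<le> Ku4 * (us a + 1)^2"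
proof -
  note S = step_L[OF us_bound us_stepF l, of a, unfolded mean_us1 mean_us2 ce_def[symmetric]
     qu1_def[symmetric] qu2_def[symmetric] que_def[symmetric] Ku4_def[symmetric]]
  have eq: "real (a $ 1) * 1 + real (a $ 2) * 1 + ce = us a + ce"
    by (simp add: us_def)
  have u: "real (a$1) + real (a$2) + 1 = us a + 1" by (simp add: us_def)
  show ?thesis using S unfolding G_def eq u by (simp only: mult.commute)
qed

end

context bp begin

definition "Up k \<omega> = us (XX k \<omega>)"
definition "Vp k \<omega> = vd (XX k \<omega>)"
definition "Av k \<omega> = lam * Vp (k-1) \<omega> + de"
definition "Dv k \<omega> = Vp k \<omega> - Av k \<omega>"
definition "Du k \<omega> = Up k \<omega> - (Up (k-1) \<omega> + ce)"
definition sig :: "nat^2 \<Rightarrow> real" where "sig x = real (x$1) * s1 + real (x$2) * s2 + se"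

lemma meas_X1: "(\<lambda>\<omega>. F (XX k \<omega>) :: real) \<in> borel_measurable M"
  using measurable_compose[OF meas_XX, of "F" borel k] by simp

lemma meas_X2: "(\<lambda>\<omega>. F (XX k \<omega>) (XX m \<omega>) :: real) \<in> borel_measurable M"
proof -
  have "(\<lambda>\<omega>. (\<lambda>a \<omega>. F a (XX m \<omega>)) (XX k \<omega>) \<omega>) \<in> borel_measurable M"
    by (rule measurable_compose_countable[OF _ meas_XX]) (rule meas_X1)
  then show ?thesis by simp
qed

lemma meas_X3: "(\<lambda>\<omega>. F (XX k \<omega>) (XX m \<omega>) (XX n \<omega>) :: real) \<in> borel_measurable M"
proof -
  have "(\<lambda>\<omega>. (\<lambda>a \<omega>. F a (XX m \<omega>) (XX n \<omega>)) (XX k \<omega>) \<omega>) \<in> borel_measurable M"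
    by (rule measurable_compose_countable[OF _ meas_XX]) (rule meas_X2)
  then show ?thesis by simp
qed

lemma meas_X4: "(\<lambda>\<omega>. F (XX k \<omega>) (XX m \<omega>) (XX n \<omega>) (XX r \<omega>) :: real) \<in> borel_measurable M"
proof -
  have "(\<lambda>\<omega>. (\<lambda>a \<omega>. F a (XX m \<omega>) (XX n \<omega>) (XX r \<omega>)) (XX k \<omega>) \<omega>) \<in> borel_measurable M"
    by (rule measurable_compose_countable[OF _ meas_XX]) (rule meas_X3)
  then show ?thesis by simp
qed

lemma meas_bpiF1: "k < l \<Longrightarrow> (\<lambda>p. F (bpiF p k) :: real) \<in> borel_measurable (PiM (past l) cs)"
  using measurable_compose[OF meas_bpiF, of k l F borel] by simp

lemma meas_bpiF3:
  assumes "i < l" "j < l" "m < l"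
  shows "(\<lambda>p. F (bpiF p i) (bpiF p j) (bpiF p m) :: real) \<in> borel_measurable (PiM (past l) cs)"
proof -
  have "(\<lambda>p. (\<lambda>a p. F a (bpiF p j) (bpiF p m)) (bpiF p i) p) \<in> borel_measurable (PiM (past l) cs)"
  proof (rule measurable_compose_countable[OF _ meas_bpiF[OF assms(1)]])
    fix a
    have "(\<lambda>p. (\<lambda>b p. F a b (bpiF p m)) (bpiF p j) p) \<in> borel_measurable (PiM (past l) cs)"
      by (rule measurable_compose_countable[OF _ meas_bpiF[OF assms(2)]]) (rule meas_bpiF1[OF assms(3)])
    then show "(\<lambda>p. F a (bpiF p j) (bpiF p m)) \<in> borel_measurable (PiM (past l) cs)" by simp
  qed
  then show ?thesis by simp
qed

lemma cond3:
  fixes F :: "nat^2 \<Rightarrow> nat^2 \<Rightarrow> nat^2 \<Rightarrow> real" and \<phi> :: "nat^2 \<Rightarrow> nat^2 \<Rightarrow> real"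
  assumes l: "1 \<le> l" and ijm: "i < l" "j < l" "m < l"
    and int: "integrable M (\<lambda>\<omega>. F (XX i \<omega>) (XX j \<omega>) (XX m \<omega>) * \<phi> (XX (l-1) \<omega>) (XX l \<omega>))"
  shows "(\<integral>\<omega>. F (XX i \<omega>) (XX j \<omega>) (XX m \<omega>) * \<phi> (XX (l-1) \<omega>) (XX l \<omega>) \<partial>M) =
         (\<integral>\<omega>. F (XX i \<omega>) (XX j \<omega>) (XX m \<omega>) * (\<integral>\<omega>'. \<phi> (XX (l-1) \<omega>) (stepF l (XX (l-1) \<omega>) (NS \<omega>')) \<partial>M) \<partial>M)"
proof -
  define w where "w p = F (bpiF p i) (bpiF p j) (bpiF p m)" for p
  have wm: "w \<in> borel_measurable (PiM (past l) cs)" unfolding w_def by (rule meas_bpiF3[OF ijm])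
  have wP: "w (PP l \<omega>) = F (XX i \<omega>) (XX j \<omega>) (XX m \<omega>)" for \<omega>
    unfolding w_def using X_past ijm by simp
  show ?thesis using cond[OF l wm] int unfolding wP by simp
qed

lemma meas_QQ[measurable]: "QQ l \<in> measurable M (PiM (pres l) cs)" if "1 \<le> l"
  unfolding QQ_def NS_def
  by (rule measurable_restrict) (use indep pres_sub[OF that] in \<open>auto simp: indep_vars_def\<close>)

lemma meas_step_NS: "1 \<le> l \<Longrightarrow> (\<lambda>\<omega>. F (stepF l a (NS \<omega>)) :: real) \<in> borel_measurable M"
proof -
  assume l: "1 \<le> l"
  have "(\<lambda>\<omega>. stepF l a (QQ l \<omega>)) \<in> measurable M (count_space UNIV)"
    by (rule measurable_compose[OF meas_QQ[OF l] meas_stepF]) (auto simp: pres_def)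
  moreover have "stepF l a (QQ l \<omega>) = stepF l a (NS \<omega>)" for \<omega>
    unfolding QQ_def using l by (rule stepF_local)
  ultimately have "(\<lambda>\<omega>. stepF l a (NS \<omega>)) \<in> measurable M (count_space UNIV)" by simp
  then show ?thesis using measurable_compose[of _ M "count_space UNIV" F borel] by simp
qed

lemma us_nonneg: "0 \<le> us a" by (simp add: us_def)
lemma vd_le_us: "\<bar>vd a\<bar> \<le> us a" by (simp add: us_def vd_def)

lemma ce_nonneg: "0 \<le> ce"
  unfolding ce_def by (rule integral_nonneg_AE) (simp add: us_nonneg)

lemma L4_Up: "L4 (Up k)"
proof (induction k)
  case 0 then show ?case by (simp add: Up_def us_def)
next
  case (Suc k)
  define l where "l = Suc k"
  have l: "1 \<le> l" unfolding l_def by simp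
  define h where "h u = 8 * Ku4 * (u + 1)^2 + 8 * (u + ce)^4" for u :: real
  have inner: "(\<integral>\<^sup>+\<omega>'. ennreal (us (stepF l a (NS \<omega>')) ^ 4) \<partial>M) \<le> ennreal (h (us a))" for a
  proof -
    define G where "G \<omega> = us (stepF l a (NS \<omega>)) - (us a + ce)" for \<omega>
    note P = PhiU[OF l, of a, folded G_def]
    have Gm: "G \<in> borel_measurable M" unfolding G_def using meas_step_NS[OF l, of "\<lambda>v. us v - (us a + ce)" a] by simp
    have ib: "integrable M (\<lambda>\<omega>. 8 * G \<omega> ^ 4 + 8 * (us a + ce) ^ 4)" using P by simp
    have "(\<integral>\<^sup>+\<omega>'. ennreal (us (stepF l a (NS \<omega>')) ^ 4) \<partial>M) \<le> (\<integral>\<^sup>+\<omega>'. ennreal (8 * G \<omega>' ^ 4 + 8 * (us a + ce) ^ 4) \<partial>M)"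
    proof (rule nn_integral_mono)
      fix \<omega> 
      have "us (stepF l a (NS \<omega>)) = G \<omega> + (us a + ce)" unfolding G_def by simp
      then have "us (stepF l a (NS \<omega>)) ^ 4 \<le> 8 * (G \<omega> ^ 4 + (us a + ce) ^ 4)" using pow4_sum_le_abs by simp
      then show "ennreal (us (stepF l a (NS \<omega>)) ^ 4) \<le> ennreal (8 * G \<omega> ^ 4 + 8 * (us a + ce) ^ 4)"
        by (intro ennreal_leI) simp
    qed
    also have "\<dots> = ennreal (\<integral>\<omega>'. 8 * G \<omega>' ^ 4 + 8 * (us a + ce) ^ 4 \<partial>M)"
      by (rule nn_integral_eq_integral[OF ib]) simp
    also have "(\<integral>\<omega>'. 8 * G \<omega>' ^ 4 + 8 * (us a + ce) ^ 4 \<partial>M) = 8 * (\<integral>\<omega>'. G \<omega>' ^ 4 \<partial>M) + 8 * (us a + ce) ^ 4"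
      using P by (simp add: prob_space)
    also have "\<dots> \<le> h (us a)" unfolding h_def using P by simp
    finally show ?thesis by (simp add: ennreal_leI)
  qed
  have IH: "L4 (Up k)" by (rule Suc.IH)
  have Lh: "integrable M (\<lambda>\<omega>. h (Up k \<omega>))"
  proof -
    have a: "L4 (\<lambda>\<omega>. Up k \<omega> + 1)" by (rule L4_add[OF IH]) simp
    have b: "L4 (\<lambda>\<omega>. Up k \<omega> + ce)" by (rule L4_add[OF IH]) simp
    show ?thesis unfolding h_def using L4_int(2)[OF a] L4_int(3)[OF b] by simp
  qed
  have hnn: "0 \<le> h (Up k \<omega>)" for \<omega>
    unfolding h_def using ce_nonneg us_nonneg[of "XX k \<omega>"]
    by (intro add_nonneg_nonneg mult_nonneg_nonneg) (auto simp: Up_def Ku4_def intro!: add_nonneg_nonneg integral_nonneg_AE)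
  have "(\<integral>\<^sup>+\<omega>. ennreal (Up l \<omega> ^ 4) \<partial>M) = (\<integral>\<^sup>+\<omega>. (\<integral>\<^sup>+\<omega>'. ennreal (us (stepF l (XX (l-1) \<omega>) (NS \<omega>')) ^ 4) \<partial>M) \<partial>M)"
    unfolding Up_def using cond_nn[OF l, of "\<lambda>x y. ennreal (us y ^ 4)"] by simp
  also have "\<dots> \<le> (\<integral>\<^sup>+\<omega>. ennreal (h (Up k \<omega>)) \<partial>M)"
    by (rule nn_integral_mono) (use inner in \<open>simp add: Up_def l_def\<close>)
  also have "\<dots> = ennreal (\<integral>\<omega>. h (Up k \<omega>) \<partial>M)"
    by (rule nn_integral_eq_integral[OF Lh]) (simp add: hnn)
  also have "\<dots> < \<infinity>" by simp
  finally have fin: "(\<integral>\<^sup>+\<omega>. ennreal (Up l \<omega> ^ 4) \<partial>M) < \<infinity>" .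
  have "integrable M (\<lambda>\<omega>. Up l \<omega> ^ 4)"
    by (rule integrableI_nonneg) (use fin in \<open>auto simp: Up_def intro: meas_X1\<close>)
  moreover have "Up l \<in> borel_measurable M" unfolding Up_def by (rule meas_X1)
  ultimately show ?case unfolding L4_def l_def by simp
qed

end

context bp begin

lemma L4_Vp: "L4 (Vp k)"
proof (rule L4_dom[OF L4_Up])
  show "Vp k \<in> borel_measurable M" unfolding Vp_def by (rule meas_X1)
  fix \<omega>
  have "\<bar>Vp k \<omega>\<bar> \<le> Up k \<omega>" unfolding Vp_def Up_def by (rule vd_le_us)
  moreover have "0 \<le> Up k \<omega>" unfolding Up_def by (rule us_nonneg)
  ultimately show "\<bar>Vp k \<omega>\<bar> \<le> \<bar>Up k \<omega>\<bar>" by linarith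
qed

lemma L4_Av: "L4 (Av k)"
  unfolding Av_def by (intro L4_add L4_cmult L4_Vp L4_const)

lemma L4_Dv: "L4 (Dv k)"
  unfolding Dv_def by (intro L4_minus L4_Vp L4_Av)

lemma L4_Du: "L4 (Du k)"
  unfolding Du_def by (intro L4_minus L4_add L4_Up L4_const)

lemma L4_sig: "L4 (\<lambda>\<omega>. sig (XX k \<omega>))"
proof -
  have e: "sig (XX k \<omega>) = (s1/2) * Up k \<omega> + (s1/2) * Vp k \<omega> + ((s2/2) * Up k \<omega> + (-(s2/2)) * Vp k \<omega>) + se" for \<omega>
    unfolding sig_def Up_def Vp_def vd_us_comp[of "XX k \<omega>"] by (simp add: field_simps)
  have "L4 (\<lambda>\<omega>. (s1/2) * Up k \<omega> + (s1/2) * Vp k \<omega> + ((s2/2) * Up k \<omega> + (-(s2/2)) * Vp k \<omega>) + se)"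
    by (intro L4_add L4_cmult L4_Up L4_Vp L4_const)
  then show ?thesis unfolding e .
qed

lemma L4_X3: "L4 f \<Longrightarrow> L4 g \<Longrightarrow> integrable M (\<lambda>\<omega>. f \<omega> * g \<omega>)"
  using L4_int4[of f g "\<lambda>_. 1" "\<lambda>_. 1"] by simp

lemma Dv_phi: "1 \<le> l \<Longrightarrow> Dv l \<omega> = vd (XX l \<omega>) - (lam * vd (XX (l-1) \<omega>) + de)"
  by (simp add: Dv_def Av_def Vp_def)

lemma Du_phi: "1 \<le> l \<Longrightarrow> Du l \<omega> = us (XX l \<omega>) - (us (XX (l-1) \<omega>) + ce)"
  by (simp add: Du_def Up_def)

lemma PhiV_int2:
  assumes l: "1 \<le> l"
  shows "integrable M (\<lambda>\<omega>. (vd (stepF l a (NS \<omega>)) - (lam * vd a + de)) ^ 2)"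
    "integrable M (\<lambda>\<omega>. (vd (stepF l a (NS \<omega>)) - (lam * vd a + de)))"
  using int24[OF meas_step_NS[OF l, of "\<lambda>v. vd v - (lam * vd a + de)" a]] PhiV[OF l, of a] by auto

lemma PhiU_int2:
  assumes l: "1 \<le> l"
  shows "integrable M (\<lambda>\<omega>. (us (stepF l a (NS \<omega>)) - (us a + ce)) ^ 2)"
    "integrable M (\<lambda>\<omega>. (us (stepF l a (NS \<omega>)) - (us a + ce)))"
  using int24[OF meas_step_NS[OF l, of "\<lambda>v. us v - (us a + ce)" a]] PhiU[OF l, of a] by auto

lemma mart_V:
  assumes l: "1 \<le> l" and ijm: "i < l" "j < l" "m < l" and F: "L4 (\<lambda>\<omega>. F (XX i \<omega>) (XX j \<omega>) (XX m \<omega>))"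
  shows "(\<integral>\<omega>. F (XX i \<omega>) (XX j \<omega>) (XX m \<omega>) * Dv l \<omega> \<partial>M) = 0"
proof -
  let ?\<phi> = "\<lambda>x y. vd y - (lam * vd x + de)"
  have int: "integrable M (\<lambda>\<omega>. F (XX i \<omega>) (XX j \<omega>) (XX m \<omega>) * ?\<phi> (XX (l-1) \<omega>) (XX l \<omega>))"
    using L4_X3[OF F L4_Dv[of l]] Dv_phi[OF l] by simp
  have inner: "(\<integral>\<omega>'. ?\<phi> a (stepF l a (NS \<omega>')) \<partial>M) = 0" for a
    using PhiV[OF l, of a] by simp
  show ?thesis using cond3[OF l ijm int] Dv_phi[OF l] by (simp add: inner)
qed

lemma mart_U:
  assumes l: "1 \<le> l" and ijm: "i < l" "j < l" "m < l" and F: "L4 (\<lambda>\<omega>. F (XX i \<omega>) (XX j \<omega>) (XX m \<omega>))"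
  shows "(\<integral>\<omega>. F (XX i \<omega>) (XX j \<omega>) (XX m \<omega>) * Du l \<omega> \<partial>M) = 0"
proof -
  let ?\<phi> = "\<lambda>x y. us y - (us x + ce)"
  have int: "integrable M (\<lambda>\<omega>. F (XX i \<omega>) (XX j \<omega>) (XX m \<omega>) * ?\<phi> (XX (l-1) \<omega>) (XX l \<omega>))"
    using L4_X3[OF F L4_Du[of l]] Du_phi[OF l] by simp
  have inner: "(\<integral>\<omega>'. ?\<phi> a (stepF l a (NS \<omega>')) \<partial>M) = 0" for a
    using PhiU[OF l, of a] by simp
  show ?thesis using cond3[OF l ijm int] Du_phi[OF l] by (simp add: inner)
qed

lemma mart_V2:
  assumes l: "1 \<le> l" and ijm: "i < l" "j < l" "m < l" and F: "L4 (\<lambda>\<omega>. F (XX i \<omega>) (XX j \<omega>) (XX m \<omega>))"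
  shows "(\<integral>\<omega>. F (XX i \<omega>) (XX j \<omega>) (XX m \<omega>) * (Dv l \<omega> ^ 2 - sig (XX (l-1) \<omega>)) \<partial>M) = 0"
proof -
  let ?\<phi> = "\<lambda>x y. (vd y - (lam * vd x + de))^2 - sig x"
  have e: "F (XX i \<omega>) (XX j \<omega>) (XX m \<omega>) * (Dv l \<omega> ^ 2 - sig (XX (l-1) \<omega>))
     = F (XX i \<omega>) (XX j \<omega>) (XX m \<omega>) * Dv l \<omega> * Dv l \<omega> * 1 - F (XX i \<omega>) (XX j \<omega>) (XX m \<omega>) * sig (XX (l-1) \<omega>) * 1 * 1" for \<omega>
    by (simp add: power2_eq_square algebra_simps)
  have int0: "integrable M (\<lambda>\<omega>. F (XX i \<omega>) (XX j \<omega>) (XX m \<omega>) * (Dv l \<omega> ^ 2 - sig (XX (l-1) \<omega>)))"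
    unfolding e using L4_int4[OF F L4_Dv[of l] L4_Dv[of l] L4_const[of 1]] L4_int4[OF F L4_sig[of "l-1"] L4_const[of 1] L4_const[of 1]]
    by (intro Bochner_Integration.integrable_diff) auto
  have int: "integrable M (\<lambda>\<omega>. F (XX i \<omega>) (XX j \<omega>) (XX m \<omega>) * ?\<phi> (XX (l-1) \<omega>) (XX l \<omega>))"
    using int0 Dv_phi[OF l] by simp
  have inner: "(\<integral>\<omega>'. ?\<phi> a (stepF l a (NS \<omega>')) \<partial>M) = 0" for a
    using PhiV[OF l, of a] PhiV_int2[OF l, of a] by (simp add: prob_space sig_def)
  show ?thesis using cond3[OF l ijm int] Dv_phi[OF l] by (simp add: inner)
qed

end

context bp begin

lemma mart_V':
  assumes l: "1 \<le> l" and ijm: "i < l" "j < l" "m < l"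
    and int: "integrable M (\<lambda>\<omega>. F (XX i \<omega>) (XX j \<omega>) (XX m \<omega>) * Dv l \<omega>)"
  shows "(\<integral>\<omega>. F (XX i \<omega>) (XX j \<omega>) (XX m \<omega>) * Dv l \<omega> \<partial>M) = 0"
proof -
  let ?\<phi> = "\<lambda>x y. vd y - (lam * vd x + de)"
  have int': "integrable M (\<lambda>\<omega>. F (XX i \<omega>) (XX j \<omega>) (XX m \<omega>) * ?\<phi> (XX (l-1) \<omega>) (XX l \<omega>))"
    using int Dv_phi[OF l] by simp
  have inner: "(\<integral>\<omega>'. ?\<phi> a (stepF l a (NS \<omega>')) \<partial>M) = 0" for a
    using PhiV[OF l, of a] by simp
  show ?thesis using cond3[OF l ijm int'] Dv_phi[OF l] by (simp add: inner)
qed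

lemma mart_V2':
  assumes l: "1 \<le> l" and ijm: "i < l" "j < l" "m < l"
    and int: "integrable M (\<lambda>\<omega>. F (XX i \<omega>) (XX j \<omega>) (XX m \<omega>) * (Dv l \<omega> ^ 2 - sig (XX (l-1) \<omega>)))"
  shows "(\<integral>\<omega>. F (XX i \<omega>) (XX j \<omega>) (XX m \<omega>) * (Dv l \<omega> ^ 2 - sig (XX (l-1) \<omega>)) \<partial>M) = 0"
proof -
  let ?\<phi> = "\<lambda>x y. (vd y - (lam * vd x + de))^2 - sig x"
  have int': "integrable M (\<lambda>\<omega>. F (XX i \<omega>) (XX j \<omega>) (XX m \<omega>) * ?\<phi> (XX (l-1) \<omega>) (XX l \<omega>))"
    using int Dv_phi[OF l] by simp
  have inner: "(\<integral>\<omega>'. ?\<phi> a (stepF l a (NS \<omega>')) \<partial>M) = 0" for a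
    using PhiV[OF l, of a] PhiV_int2[OF l, of a] by (simp add: prob_space sig_def)
  show ?thesis using cond3[OF l ijm int'] Dv_phi[OF l] by (simp add: inner)
qed

lemma EUp: "(\<integral>\<omega>. Up k \<omega> \<partial>M) = real k * ce"
proof (induction k)
  case 0 then show ?case by (simp add: Up_def us_def)
next
  case (Suc k)
  have l: "1 \<le> Suc k" by simp
  have e: "Up (Suc k) \<omega> = Up k \<omega> + ce + Du (Suc k) \<omega>" for \<omega> by (simp add: Du_def)
  have z: "(\<integral>\<omega>. (\<lambda>_ _ _. 1) (XX 0 \<omega>) (XX 0 \<omega>) (XX 0 \<omega>) * Du (Suc k) \<omega> \<partial>M) = 0"
    by (rule mart_U[OF l]) auto
  have "(\<integral>\<omega>. Up (Suc k) \<omega> \<partial>M) = (\<integral>\<omega>. Up k \<omega> \<partial>M) + ce + (\<integral>\<omega>. Du (Suc k) \<omega> \<partial>M)"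
    unfolding e using L4_int(1)[OF L4_Up[of k]] L4_int(1)[OF L4_Du[of "Suc k"]] by (simp add: prob_space)
  then show ?case using Suc z by (simp add: algebra_simps)
qed

definition "Ku2 = qu1 + qu2 + que"

lemma qu_nonneg: "0 \<le> qu1" "0 \<le> qu2" "0 \<le> que"
  unfolding qu1_def qu2_def que_def by (auto intro!: integral_nonneg_AE)
lemma s_nonneg: "0 \<le> s1" "0 \<le> s2" "0 \<le> se"
  unfolding s1_def s2_def se_def by (auto intro!: integral_nonneg_AE)

lemma EDu2: assumes l: "1 \<le> l"
  shows "(\<integral>\<omega>. Du l \<omega> ^ 2 \<partial>M) \<le> Ku2 * (real (l-1) * ce + 1)"
proof -
  let ?\<phi> = "\<lambda>x y. (us y - (us x + ce))^2"
  define \<Psi> where "\<Psi> a = real (a$1) * qu1 + real (a$2) * qu2 + que" for a :: "nat^2"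
  have int: "integrable M (\<lambda>\<omega>. (\<lambda>_ _ _. 1) (XX 0 \<omega>) (XX 0 \<omega>) (XX 0 \<omega>) * ?\<phi> (XX (l-1) \<omega>) (XX l \<omega>))"
    using L4_int(2)[OF L4_Du[of l]] Du_phi[OF l] by simp
  have inner: "(\<integral>\<omega>'. ?\<phi> a (stepF l a (NS \<omega>')) \<partial>M) = \<Psi> a" for a
    using PhiU[OF l, of a] unfolding \<Psi>_def by simp
  have "(\<integral>\<omega>. Du l \<omega> ^ 2 \<partial>M) = (\<integral>\<omega>. \<Psi> (XX (l-1) \<omega>) \<partial>M)"
    using cond3[OF l _ _ _ int, of 0 0 0] Du_phi[OF l] l by (simp add: inner)
  also have "\<dots> \<le> (\<integral>\<omega>. Ku2 * (Up (l-1) \<omega> + 1) \<partial>M)"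
  proof (rule integral_mono)
    have e: "\<Psi> (XX (l-1) \<omega>) = (qu1/2) * Up (l-1) \<omega> + (qu1/2) * Vp (l-1) \<omega> + ((qu2/2) * Up (l-1) \<omega> + (-(qu2/2)) * Vp (l-1) \<omega>) + que" for \<omega>
      unfolding \<Psi>_def Up_def Vp_def vd_us_comp[of "XX (l-1) \<omega>"] by (simp add: field_simps)
    have "L4 (\<lambda>\<omega>. (qu1/2) * Up (l-1) \<omega> + (qu1/2) * Vp (l-1) \<omega> + ((qu2/2) * Up (l-1) \<omega> + (-(qu2/2)) * Vp (l-1) \<omega>) + que)"
      by (intro L4_add L4_cmult L4_Up L4_Vp L4_const)
    then show "integrable M (\<lambda>\<omega>. \<Psi> (XX (l-1) \<omega>))" unfolding e[symmetric] by (rule L4_int(1))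
    show "integrable M (\<lambda>\<omega>. Ku2 * (Up (l-1) \<omega> + 1))" using L4_int(1)[OF L4_Up[of "l-1"]] by simp
    fix \<omega>
    have a: "real (XX (l-1) \<omega> $ 1) \<le> Up (l-1) \<omega> + 1" "real (XX (l-1) \<omega> $ 2) \<le> Up (l-1) \<omega> + 1"
      by (auto simp: Up_def us_def)
    have "\<Psi> (XX (l-1) \<omega>) \<le> (Up (l-1) \<omega> + 1) * qu1 + (Up (l-1) \<omega> + 1) * qu2 + (Up (l-1) \<omega> + 1) * que"
    proof -
      have q: "que \<le> (Up (l-1) \<omega> + 1) * que"
        using mult_nonneg_nonneg[OF us_nonneg[of "XX (l-1) \<omega>"] qu_nonneg(3)] by (simp add: Up_def algebra_simps)
      show ?thesis
        unfolding \<Psi>_def using qu_nonneg a q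
        by (intro add_mono mult_right_mono) (auto simp: Up_def)
    qed
    then show "\<Psi> (XX (l-1) \<omega>) \<le> Ku2 * (Up (l-1) \<omega> + 1)" by (simp add: Ku2_def algebra_simps)
  qed
  also have "\<dots> = Ku2 * (real (l-1) * ce + 1)"
    using L4_int(1)[OF L4_Up[of "l-1"]] EUp[of "l-1"] by (simp add: prob_space)
  finally show ?thesis .
qed

definition "KU = 3 * ce^2 + Ku2 * ce + Ku2"

lemma Ku2_nonneg: "0 \<le> Ku2" using qu_nonneg by (simp add: Ku2_def)

lemma EUp2: "(\<integral>\<omega>. Up k \<omega> ^ 2 \<partial>M) \<le> KU * (real k)^2"
proof (induction k)
  case 0 then show ?case by (simp add: Up_def us_def)
next
  case (Suc k)
  have l: "1 \<le> Suc k" by simp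
  have e: "Up (Suc k) \<omega> ^ 2 = (Up k \<omega> + ce)^2 + 2 * ((Up k \<omega> + ce) * Du (Suc k) \<omega>) + Du (Suc k) \<omega> ^ 2" for \<omega>
    by (simp add: Du_def power2_eq_square algebra_simps)
  have z: "(\<integral>\<omega>. (\<lambda>x _ _. us x + ce) (XX k \<omega>) (XX k \<omega>) (XX k \<omega>) * Du (Suc k) \<omega> \<partial>M) = 0"
    by (rule mart_U[OF l]) (auto simp: Up_def[symmetric] intro!: L4_add L4_Up)
  have LU: "L4 (\<lambda>\<omega>. Up k \<omega> + ce)" by (intro L4_add L4_Up L4_const)
  have i1: "integrable M (\<lambda>\<omega>. (Up k \<omega> + ce)^2)" by (rule L4_int(2)[OF LU])
  have i2: "integrable M (\<lambda>\<omega>. (Up k \<omega> + ce) * Du (Suc k) \<omega>)" by (rule L4_X3[OF LU L4_Du])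
  have i3: "integrable M (\<lambda>\<omega>. Du (Suc k) \<omega> ^ 2)" by (rule L4_int(2)[OF L4_Du])
  have "(\<integral>\<omega>. Up (Suc k) \<omega> ^ 2 \<partial>M) = (\<integral>\<omega>. (Up k \<omega> + ce)^2 \<partial>M) + 2 * (\<integral>\<omega>. (Up k \<omega> + ce) * Du (Suc k) \<omega> \<partial>M) + (\<integral>\<omega>. Du (Suc k) \<omega> ^ 2 \<partial>M)"
    unfolding e using i1 i2 i3 by simp
  also have "(\<integral>\<omega>. (Up k \<omega> + ce) * Du (Suc k) \<omega> \<partial>M) = 0" using z by (simp add: Up_def)
  also have "(\<integral>\<omega>. (Up k \<omega> + ce)^2 \<partial>M) = (\<integral>\<omega>. Up k \<omega> ^ 2 \<partial>M) + 2 * ce * (\<integral>\<omega>. Up k \<omega> \<partial>M) + ce^2"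
  proof -
    have "(\<lambda>\<omega>. (Up k \<omega> + ce)^2) = (\<lambda>\<omega>. Up k \<omega> ^ 2 + (2 * ce) * Up k \<omega> + ce^2)"
      by (rule ext) (simp add: power2_eq_square algebra_simps)
    then show ?thesis using L4_int(1,2)[OF L4_Up[of k]] by (simp add: prob_space)
  qed
  finally have A: "(\<integral>\<omega>. Up (Suc k) \<omega> ^ 2 \<partial>M) \<le> KU * (real k)^2 + 2 * ce * (real k * ce) + ce^2 + Ku2 * (real k * ce + 1)"
    using Suc.IH EDu2[OF l] EUp[of k] by simp
  have B: "2 * ce * (real k * ce) + ce^2 + Ku2 * (real k * ce + 1) \<le> KU * (2 * real k + 1)"
  proof -
    have c: "0 \<le> ce" "0 \<le> Ku2" by (rule ce_nonneg, rule Ku2_nonneg)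
    have "2 * ce * (real k * ce) + ce^2 + Ku2 * (real k * ce + 1) = real k * (2 * ce^2 + Ku2 * ce) + (ce^2 + Ku2)"
      by (simp add: power2_eq_square algebra_simps)
    also have "\<dots> \<le> real k * (2 * KU) + KU"
      using c by (intro add_mono mult_left_mono) (auto simp: KU_def power2_eq_square)
    finally show ?thesis by (simp add: algebra_simps)
  qed
  have "KU * (real k)^2 + KU * (2 * real k + 1) = KU * (real (Suc k))^2"
    by (simp add: power2_eq_square algebra_simps)
  then show ?case using A B by linarith
qed

end

lemma pow4_abs_mono: "\<bar>x::real\<bar> \<le> y \<Longrightarrow> x ^ 4 \<le> y ^ 4"
proof -
  assume a: "\<bar>x\<bar> \<le> y"
  have "\<bar>x\<bar> ^ 4 \<le> y ^ 4" by (rule power_mono[OF a]) simp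
  moreover have "\<bar>x\<bar> ^ 4 = x ^ 4" by (rule power_even_abs_numeral) simp
  ultimately show ?thesis by simp
qed

lemma contr4:
  fixes lam de V :: real
  assumes l1: "\<bar>lam\<bar> < 1"
  defines "\<theta> \<equiv> (1 + \<bar>lam\<bar>) / 2"
  defines "R \<equiv> \<bar>lam\<bar> * (2 * \<bar>de\<bar> / (1 - \<bar>lam\<bar>)) + \<bar>de\<bar>"
  shows "(lam * V + de) ^ 4 \<le> \<theta> ^ 4 * V ^ 4 + R ^ 4"
proof (cases "2 * \<bar>de\<bar> / (1 - \<bar>lam\<bar>) \<le> \<bar>V\<bar>")
  case True
  have pos: "0 < 1 - \<bar>lam\<bar>" using l1 by simp
  have "2 * \<bar>de\<bar> \<le> \<bar>V\<bar> * (1 - \<bar>lam\<bar>)" using True pos by (simp add: divide_le_eq)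
  then have d: "\<bar>de\<bar> \<le> (\<theta> - \<bar>lam\<bar>) * \<bar>V\<bar>" unfolding \<theta>_def by (simp add: field_simps)
  have "\<bar>lam * V + de\<bar> \<le> \<bar>lam\<bar> * \<bar>V\<bar> + \<bar>de\<bar>" by (metis abs_mult abs_triangle_ineq)
  also have "\<dots> \<le> \<theta> * \<bar>V\<bar>" using d by (simp add: algebra_simps)
  finally have "(lam * V + de) ^ 4 \<le> (\<theta> * \<bar>V\<bar>) ^ 4" by (rule pow4_abs_mono)
  also have "\<dots> = \<theta> ^ 4 * V ^ 4" by (simp add: power_mult_distrib power_even_abs_numeral)
  finally have "(lam * V + de) ^ 4 \<le> \<theta> ^ 4 * V ^ 4" .
  moreover have "0 \<le> R ^ 4" by simp
  ultimately show ?thesis by linarith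
next
  case False
  have "\<bar>lam * V + de\<bar> \<le> \<bar>lam\<bar> * \<bar>V\<bar> + \<bar>de\<bar>" by (metis abs_mult abs_triangle_ineq)
  also have "\<dots> \<le> R" unfolding R_def using False by (intro add_mono mult_left_mono) auto
  finally have "(lam * V + de) ^ 4 \<le> R ^ 4" by (rule pow4_abs_mono)
  moreover have "0 \<le> \<theta> ^ 4 * V ^ 4" by simp
  ultimately show ?thesis by linarith
qed

lemma expand4:
  fixes A D \<eta> :: real
  assumes "0 < \<eta>"
  shows "(A + D) ^ 4 \<le> (1 + \<eta>) * A ^ 4 + 4 * (A ^ 3 * D) + (3 + 16 / \<eta>) * D ^ 4"
proof -
  have e: "(A + D) ^ 4 = A ^ 4 + 4 * (A ^ 3 * D) + 6 * (A^2 * D^2) + 4 * (A * D^3) + D ^ 4"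
    by (simp add: power2_eq_square power3_eq_cube power4_eq_xxxx algebra_simps)
  have 1: "2 * (A * D^3) \<le> A^2 * D^2 + D^4"
  proof -
    have "0 \<le> (A * D - D^2)^2" by simp
    then show ?thesis by (simp add: power2_eq_square power3_eq_cube power4_eq_xxxx algebra_simps)
  qed
  have 2: "8 * (A^2 * D^2) \<le> \<eta> * A^4 + (16 / \<eta>) * D^4"
  proof -
    have "0 \<le> (\<eta> * A^2 - 4 * D^2)^2" by simp
    then have "8 * \<eta> * (A^2 * D^2) \<le> \<eta>^2 * A^4 + 16 * D^4"
      by (simp add: power2_eq_square power4_eq_xxxx algebra_simps)
    then have "\<eta> * (8 * (A^2 * D^2)) \<le> \<eta> * (\<eta> * A^4 + (16 / \<eta>) * D^4)"
      using assms by (simp add: algebra_simps power2_eq_square)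
    then show ?thesis using assms by (simp add: mult_le_cancel_left_pos)
  qed
  have 3: "(A+D)^4 \<le> A^4 + 4*(A^3*D) + 8*(A^2*D^2) + 3*D^4" using e 1 by linarith
  have 4: "(1 + \<eta>) * A ^ 4 = A^4 + \<eta> * A^4" "(3 + 16 / \<eta>) * D ^ 4 = 3 * D^4 + (16 / \<eta>) * D^4"
    by (simp_all add: algebra_simps)
  show ?thesis unfolding 4 using 3 2 by linarith
qed

context bp begin

lemma lam_lt1: "\<bar>lam\<bar> < 1" using ab unfolding lam_def by auto

lemma Kv4_nonneg: "0 \<le> Kv4"
  unfolding Kv4_def by (intro add_nonneg_nonneg integral_nonneg_AE mult_nonneg_nonneg) auto

definition "KD = Kv4 * (KU + 2 * ce + 1)"

lemma KU_nonneg: "0 \<le> KU" unfolding KU_def using ce_nonneg Ku2_nonneg by simp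

lemma EUp1sq: "(\<integral>\<omega>. (Up k \<omega> + 1)^2 \<partial>M) \<le> KU * (real k)^2 + 2 * real k * ce + 1"
proof -
  have "(\<lambda>\<omega>. (Up k \<omega> + 1)^2) = (\<lambda>\<omega>. Up k \<omega> ^ 2 + 2 * Up k \<omega> + 1)"
    by (rule ext) (simp add: power2_eq_square algebra_simps)
  then have "(\<integral>\<omega>. (Up k \<omega> + 1)^2 \<partial>M) = (\<integral>\<omega>. Up k \<omega> ^ 2 \<partial>M) + 2 * (\<integral>\<omega>. Up k \<omega> \<partial>M) + 1"
    using L4_int(1,2)[OF L4_Up[of k]] by (simp add: prob_space)
  then show ?thesis using EUp2[of k] EUp[of k] by simp
qed

lemma EDv4: assumes l: "1 \<le> l"
  shows "(\<integral>\<omega>. Dv l \<omega> ^ 4 \<partial>M) \<le> KD * (real l)^2"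
proof -
  let ?\<phi> = "\<lambda>x y. (vd y - (lam * vd x + de))^4"
  define H where "H a = (\<integral>\<omega>'. ?\<phi> a (stepF l a (NS \<omega>')) \<partial>M)" for a
  have int: "integrable M (\<lambda>\<omega>. (\<lambda>_ _ _. 1) (XX 0 \<omega>) (XX 0 \<omega>) (XX 0 \<omega>) * ?\<phi> (XX (l-1) \<omega>) (XX l \<omega>))"
    using L4_int(3)[OF L4_Dv[of l]] Dv_phi[OF l] by simp
  have Hb: "H a \<le> Kv4 * (us a + 1)^2" for a using PhiV[OF l, of a] unfolding H_def by simp
  have Hn: "0 \<le> H a" for a unfolding H_def by (rule integral_nonneg_AE) simp
  have "(\<integral>\<omega>. Dv l \<omega> ^ 4 \<partial>M) = (\<integral>\<omega>. H (XX (l-1) \<omega>) \<partial>M)"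
    using cond3[OF l _ _ _ int, of 0 0 0] Dv_phi[OF l] l by (simp add: H_def)
  also have "\<dots> \<le> (\<integral>\<omega>. Kv4 * (Up (l-1) \<omega> + 1)^2 \<partial>M)"
  proof (rule integral_mono)
    have LU: "L4 (\<lambda>\<omega>. Up (l-1) \<omega> + 1)" by (intro L4_add L4_Up L4_const)
    show i2: "integrable M (\<lambda>\<omega>. Kv4 * (Up (l-1) \<omega> + 1)^2)" using L4_int(2)[OF LU] by simp
    show "integrable M (\<lambda>\<omega>. H (XX (l-1) \<omega>))"
    proof (rule Bochner_Integration.integrable_bound[OF i2])
      show "(\<lambda>\<omega>. H (XX (l-1) \<omega>)) \<in> borel_measurable M" by (rule meas_X1)
      show "AE \<omega> in M. norm (H (XX (l-1) \<omega>)) \<le> norm (Kv4 * (Up (l-1) \<omega> + 1)^2)"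
      proof (rule AE_I2)
        fix \<omega>
        have "0 \<le> Kv4 * (Up (l-1) \<omega> + 1)^2" using Kv4_nonneg by simp
        then show "norm (H (XX (l-1) \<omega>)) \<le> norm (Kv4 * (Up (l-1) \<omega> + 1)^2)"
          using Hb[of "XX (l-1) \<omega>"] Hn[of "XX (l-1) \<omega>"] by (simp add: Up_def)
      qed
    qed
    fix \<omega> show "H (XX (l-1) \<omega>) \<le> Kv4 * (Up (l-1) \<omega> + 1)^2" using Hb by (simp add: Up_def)
  qed
  also have "\<dots> = Kv4 * (\<integral>\<omega>. (Up (l-1) \<omega> + 1)^2 \<partial>M)" by simp
  also have "\<dots> \<le> Kv4 * (KU * (real (l-1))^2 + 2 * real (l-1) * ce + 1)"
    by (rule mult_left_mono[OF EUp1sq Kv4_nonneg])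
  also have "\<dots> \<le> Kv4 * ((KU + 2 * ce + 1) * (real l)^2)"
  proof (rule mult_left_mono[OF _ Kv4_nonneg])
    have r: "real (l-1) \<le> real l" "1 \<le> real l" using l by auto
    have a: "(real (l-1))^2 \<le> (real l)^2" using r by (intro power_mono) auto
    have ll: "real l \<le> (real l)^2" using r by (simp add: power2_eq_square)
    have b: "real (l-1) \<le> (real l)^2" using r ll by linarith
    have c: "1 \<le> (real l)^2" using r ll by linarith
    have "KU * (real (l-1))^2 \<le> KU * (real l)^2" by (rule mult_left_mono[OF a KU_nonneg])
    moreover have "2 * real (l-1) * ce \<le> 2 * (real l)^2 * ce" using b ce_nonneg by (simp add: mult_right_mono)
    ultimately show "KU * (real (l-1))^2 + 2 * real (l-1) * ce + 1 \<le> (KU + 2 * ce + 1) * (real l)^2"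
      using c by (simp add: algebra_simps)
  qed
  finally show ?thesis by (simp add: KD_def mult.assoc)
qed

end

lemma one_le_sq: "1 \<le> l \<Longrightarrow> 1 \<le> (real l)^2"
proof -
  assume "1 \<le> l"
  then have a: "1 \<le> real l" by simp
  have "1 * 1 \<le> real l * real l" by (rule mult_mono[OF a a]) auto
  then show ?thesis by (simp add: power2_eq_square)
qed

context bp begin

definition "th = (1 + \<bar>lam\<bar>) / 2"
definition "RR = \<bar>lam\<bar> * (2 * \<bar>de\<bar> / (1 - \<bar>lam\<bar>)) + \<bar>de\<bar>"
definition "eta = 1 / th^2 - 1"
definition "CC = (1 + eta) * RR ^ 4 + (3 + 16 / eta) * KD"
definition "KV = CC / (1 - th^2)"

lemma th_props: "0 < th" "th < 1" "0 < eta" "(1 + eta) * th ^ 4 = th ^ 2" "th^2 < 1"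
proof -
  show t0: "0 < th" unfolding th_def by simp
  show t1: "th < 1" unfolding th_def using lam_lt1 by simp
  have "th * th < 1 * 1" by (rule mult_strict_mono) (use t0 t1 in auto)
  then have t2: "th^2 < 1" by (simp add: power2_eq_square)
  then show "th^2 < 1" .
  have "0 < th^2" using t0 by simp
  then show "0 < eta" unfolding eta_def using t2 by (simp add: field_simps)
  show "(1 + eta) * th ^ 4 = th ^ 2" unfolding eta_def using t0
    by (simp add: field_simps power2_eq_square power4_eq_xxxx)
qed

lemma KD_nonneg: "0 \<le> KD" unfolding KD_def using Kv4_nonneg KU_nonneg ce_nonneg by simp

lemma CC_nonneg: "0 \<le> CC" unfolding CC_def using th_props KD_nonneg
  by (intro add_nonneg_nonneg mult_nonneg_nonneg) auto

lemma KV_nonneg: "0 \<le> KV" unfolding KV_def using CC_nonneg th_props by simp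

lemma Av_eq: "Av (Suc k) \<omega> = lam * vd (XX k \<omega>) + de" by (simp add: Av_def Vp_def)

lemma EVp4: "(\<integral>\<omega>. Vp k \<omega> ^ 4 \<partial>M) \<le> KV * (real k)^2"
proof (induction k)
  case 0 then show ?case by (simp add: Vp_def vd_def)
next
  case (Suc k)
  define l where "l = Suc k"
  have l: "1 \<le> l" unfolding l_def by simp
  have path: "Vp l \<omega> ^ 4 \<le> (1 + eta) * Av l \<omega> ^ 4 + 4 * (Av l \<omega> ^ 3 * Dv l \<omega>) + (3 + 16 / eta) * Dv l \<omega> ^ 4" for \<omega>
  proof -
    have "Vp l \<omega> = Av l \<omega> + Dv l \<omega>" by (simp add: Dv_def)
    then show ?thesis using expand4[OF th_props(3), of "Av l \<omega>" "Dv l \<omega>"] by simp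
  qed
  have iA: "integrable M (\<lambda>\<omega>. Av l \<omega> ^ 4)" by (rule L4_int(3)[OF L4_Av])
  have iD: "integrable M (\<lambda>\<omega>. Dv l \<omega> ^ 4)" by (rule L4_int(3)[OF L4_Dv])
  have iAD: "integrable M (\<lambda>\<omega>. Av l \<omega> ^ 3 * Dv l \<omega>)"
    using L4_int4[OF L4_Av[of l] L4_Av[of l] L4_Av[of l] L4_Dv[of l]] by (simp add: power3_eq_cube)
  have z: "(\<integral>\<omega>. Av l \<omega> ^ 3 * Dv l \<omega> \<partial>M) = 0"
  proof -
    have "(\<integral>\<omega>. (\<lambda>x _ _. (lam * vd x + de)^3) (XX k \<omega>) (XX k \<omega>) (XX k \<omega>) * Dv l \<omega> \<partial>M) = 0"
      by (rule mart_V'[OF l]) (use iAD in \<open>auto simp: l_def Av_eq\<close>)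
    then show ?thesis by (simp add: l_def Av_eq)
  qed
  have "(\<integral>\<omega>. Vp l \<omega> ^ 4 \<partial>M) \<le> (\<integral>\<omega>. (1 + eta) * Av l \<omega> ^ 4 + 4 * (Av l \<omega> ^ 3 * Dv l \<omega>) + (3 + 16 / eta) * Dv l \<omega> ^ 4 \<partial>M)"
    by (rule integral_mono[OF L4_int(3)[OF L4_Vp]]) (use iA iD iAD path in auto)
  also have "\<dots> = (1 + eta) * (\<integral>\<omega>. Av l \<omega> ^ 4 \<partial>M) + (3 + 16 / eta) * (\<integral>\<omega>. Dv l \<omega> ^ 4 \<partial>M)"
    using iA iD iAD z by simp
  also have "\<dots> \<le> (1 + eta) * (th ^ 4 * (\<integral>\<omega>. Vp k \<omega> ^ 4 \<partial>M) + RR ^ 4) + (3 + 16 / eta) * (KD * (real l)^2)"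
  proof (intro add_mono mult_left_mono)
    show "(\<integral>\<omega>. Dv l \<omega> ^ 4 \<partial>M) \<le> KD * (real l)^2" by (rule EDv4[OF l])
    show "(\<integral>\<omega>. Av l \<omega> ^ 4 \<partial>M) \<le> th ^ 4 * (\<integral>\<omega>. Vp k \<omega> ^ 4 \<partial>M) + RR ^ 4"
    proof -
      have "(\<integral>\<omega>. Av l \<omega> ^ 4 \<partial>M) \<le> (\<integral>\<omega>. th ^ 4 * Vp k \<omega> ^ 4 + RR ^ 4 \<partial>M)"
      proof (rule integral_mono[OF iA])
        show "integrable M (\<lambda>\<omega>. th ^ 4 * Vp k \<omega> ^ 4 + RR ^ 4)" using L4_int(3)[OF L4_Vp[of k]] by simp
        fix \<omega> show "Av l \<omega> ^ 4 \<le> th ^ 4 * Vp k \<omega> ^ 4 + RR ^ 4"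
          using contr4[OF lam_lt1, of "Vp k \<omega>" de] by (simp add: l_def Av_def th_def RR_def)
      qed
      also have "\<dots> = th ^ 4 * (\<integral>\<omega>. Vp k \<omega> ^ 4 \<partial>M) + RR ^ 4"
        using L4_int(3)[OF L4_Vp[of k]] by (simp add: prob_space)
      finally show ?thesis .
    qed
  qed (use th_props in auto)
  also have "\<dots> = th^2 * (\<integral>\<omega>. Vp k \<omega> ^ 4 \<partial>M) + (1 + eta) * RR ^ 4 + (3 + 16 / eta) * KD * (real l)^2"
    using arg_cong[OF th_props(4), of "\<lambda>t. t * (\<integral>\<omega>. Vp k \<omega> ^ 4 \<partial>M)"] by (simp add: algebra_simps)
  also have "\<dots> \<le> th^2 * (KV * (real k)^2) + CC * (real l)^2"
  proof -
    have a: "th^2 * (\<integral>\<omega>. Vp k \<omega> ^ 4 \<partial>M) \<le> th^2 * (KV * (real k)^2)"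
      by (rule mult_left_mono[OF Suc.IH]) simp
    have one: "1 \<le> (real l)^2" using one_le_sq[OF l] .
    have "(1 + eta) * RR ^ 4 \<le> (1 + eta) * RR ^ 4 * (real l)^2"
      using mult_left_mono[OF one, of "(1 + eta) * RR ^ 4"] th_props(3) by simp
    then show ?thesis using a unfolding CC_def by (simp add: algebra_simps)
  qed
  also have "\<dots> \<le> th^2 * (KV * (real l)^2) + CC * (real l)^2"
  proof -
    have "(real k)^2 \<le> (real l)^2" unfolding l_def by (intro power_mono) auto
    then have "KV * (real k)^2 \<le> KV * (real l)^2" by (rule mult_left_mono) (rule KV_nonneg)
    then have "th^2 * (KV * (real k)^2) \<le> th^2 * (KV * (real l)^2)" by (rule mult_left_mono) simp
    then show ?thesis by linarith
  qed
  also have "\<dots> = KV * (real l)^2"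
  proof -
    have "CC = KV * (1 - th^2)" unfolding KV_def using th_props(5) by simp
    then have "CC * (real l)^2 = (KV * (1 - th^2)) * (real l)^2" by simp
    then show ?thesis by (simp add: algebra_simps)
  qed
  finally show ?case unfolding l_def .
qed

definition "KA = th ^ 4 * KV + RR ^ 4"

lemma EAv4: assumes l: "1 \<le> l" shows "(\<integral>\<omega>. Av l \<omega> ^ 4 \<partial>M) \<le> KA * (real l)^2"
proof -
  have "(\<integral>\<omega>. Av l \<omega> ^ 4 \<partial>M) \<le> (\<integral>\<omega>. th ^ 4 * Vp (l-1) \<omega> ^ 4 + RR ^ 4 \<partial>M)"
  proof (rule integral_mono[OF L4_int(3)[OF L4_Av]])
    show "integrable M (\<lambda>\<omega>. th ^ 4 * Vp (l-1) \<omega> ^ 4 + RR ^ 4)" using L4_int(3)[OF L4_Vp[of "l-1"]] by simp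
    fix \<omega> show "Av l \<omega> ^ 4 \<le> th ^ 4 * Vp (l-1) \<omega> ^ 4 + RR ^ 4"
      using contr4[OF lam_lt1, of "Vp (l-1) \<omega>" de] by (simp add: Av_def th_def RR_def)
  qed
  also have "\<dots> = th ^ 4 * (\<integral>\<omega>. Vp (l-1) \<omega> ^ 4 \<partial>M) + RR ^ 4"
    using L4_int(3)[OF L4_Vp[of "l-1"]] by (simp add: prob_space)
  also have "\<dots> \<le> th ^ 4 * (KV * (real l)^2) + RR ^ 4 * (real l)^2"
  proof (intro add_mono mult_left_mono)
    have "(real (l-1))^2 \<le> (real l)^2" by (intro power_mono) auto
    then have "KV * (real (l-1))^2 \<le> KV * (real l)^2" by (rule mult_left_mono) (rule KV_nonneg)
    then show "(\<integral>\<omega>. Vp (l-1) \<omega> ^ 4 \<partial>M) \<le> KV * (real l)^2" using EVp4[of "l-1"] by linarith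
    have one: "1 \<le> (real l)^2" using one_le_sq[OF l] .
    show "RR ^ 4 \<le> RR ^ 4 * (real l)^2" using one by (simp add: mult_le_cancel_left1)
  qed (use th_props in auto)
  finally show ?thesis by (simp add: KA_def algebra_simps)
qed

lemma EVp2: "(\<integral>\<omega>. Vp k \<omega> ^ 2 \<partial>M) \<le> (KV + 1) / 2 * real k"
proof (cases "k = 0")
  case True then show ?thesis by (simp add: Vp_def vd_def)
next
  case False
  then have kp: "0 < real k" by simp
  have "(\<integral>\<omega>. Vp k \<omega> ^ 2 \<partial>M) \<le> (\<integral>\<omega>. Vp k \<omega> ^ 4 / (2 * real k) + real k / 2 \<partial>M)"
  proof (rule integral_mono[OF L4_int(2)[OF L4_Vp]])
    show "integrable M (\<lambda>\<omega>. Vp k \<omega> ^ 4 / (2 * real k) + real k / 2)" using L4_int(3)[OF L4_Vp[of k]] by simp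
    fix \<omega>
    have "0 \<le> (Vp k \<omega> ^ 2 - real k)^2" by simp
    then have "2 * real k * Vp k \<omega> ^ 2 \<le> Vp k \<omega> ^ 4 + (real k)^2"
      by (simp add: power2_eq_square power4_eq_xxxx algebra_simps)
    then show "Vp k \<omega> ^ 2 \<le> Vp k \<omega> ^ 4 / (2 * real k) + real k / 2"
      using kp by (simp add: field_simps power2_eq_square)
  qed
  also have "\<dots> = (\<integral>\<omega>. Vp k \<omega> ^ 4 \<partial>M) / (2 * real k) + real k / 2"
    using L4_int(3)[OF L4_Vp[of k]] by (simp add: prob_space)
  also have "\<dots> \<le> KV * (real k)^2 / (2 * real k) + real k / 2"
    using EVp4[of k] kp by (simp add: divide_right_mono)
  also have "\<dots> = (KV + 1) / 2 * real k" using kp by (simp add: field_simps power2_eq_square)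
  finally show ?thesis .
qed

end

lemma (in prob_space) orth_sum:
  fixes f :: "nat \<Rightarrow> 'a \<Rightarrow> real"
  assumes int: "\<And>k l. k \<in> S \<Longrightarrow> l \<in> S \<Longrightarrow> integrable M (\<lambda>\<omega>. f k \<omega> * f l \<omega>)"
    and orth: "\<And>k l. k \<in> S \<Longrightarrow> l \<in> S \<Longrightarrow> k < l \<Longrightarrow> (\<integral>\<omega>. f k \<omega> * f l \<omega> \<partial>M) = 0"
    and fin: "finite S"
  shows "(\<integral>\<omega>. (\<Sum>k\<in>S. f k \<omega>)^2 \<partial>M) = (\<Sum>k\<in>S. \<integral>\<omega>. f k \<omega> ^ 2 \<partial>M)"
proof -
  have orth': "(\<integral>\<omega>. f k \<omega> * f l \<omega> \<partial>M) = 0" if "k \<in> S" "l \<in> S" "k \<noteq> l" for k l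
  proof (cases "k < l")
    case True then show ?thesis using orth that by auto
  next
    case False then have "l < k" using that by simp
    then show ?thesis using orth[of l k] that by (simp add: mult.commute)
  qed
  have "(\<lambda>\<omega>. (\<Sum>k\<in>S. f k \<omega>)^2) = (\<lambda>\<omega>. \<Sum>k\<in>S. \<Sum>l\<in>S. f k \<omega> * f l \<omega>)"
    by (rule ext) (simp add: power2_eq_square sum_product)
  then have "(\<integral>\<omega>. (\<Sum>k\<in>S. f k \<omega>)^2 \<partial>M) = (\<Sum>k\<in>S. \<Sum>l\<in>S. \<integral>\<omega>. f k \<omega> * f l \<omega> \<partial>M)"
    using int by (simp add: Bochner_Integration.integral_sum Bochner_Integration.integrable_sum)
  also have "\<dots> = (\<Sum>k\<in>S. \<integral>\<omega>. f k \<omega> * f k \<omega> \<partial>M)"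
  proof (rule sum.cong[OF refl])
    fix k assume k: "k \<in> S"
    have "(\<Sum>l\<in>S. \<integral>\<omega>. f k \<omega> * f l \<omega> \<partial>M) = (\<Sum>l\<in>S. if l = k then \<integral>\<omega>. f k \<omega> * f k \<omega> \<partial>M else 0)"
      by (rule sum.cong[OF refl]) (use orth' k in auto)
    also have "\<dots> = (\<integral>\<omega>. f k \<omega> * f k \<omega> \<partial>M)" using k fin by simp
    finally show "(\<Sum>l\<in>S. \<integral>\<omega>. f k \<omega> * f l \<omega> \<partial>M) = (\<integral>\<omega>. f k \<omega> * f k \<omega> \<partial>M)" .
  qed
  finally show ?thesis by (simp add: power2_eq_square)
qed

context bp begin

definition "T1 k \<omega> = Av k \<omega> * Dv k \<omega>"
definition "T2 k \<omega> = Dv k \<omega> ^ 2 - sig (XX (k-1) \<omega>)"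

lemma Av_X: "Av k \<omega> = lam * vd (XX (k-1) \<omega>) + de" by (simp add: Av_def Vp_def)
lemma Dv_X: "1 \<le> k \<Longrightarrow> Dv k \<omega> = vd (XX k \<omega>) - (lam * vd (XX (k-1) \<omega>) + de)" by (rule Dv_phi)

lemma T1_int: "integrable M (\<lambda>\<omega>. T1 k \<omega> * T1 l \<omega>)"
  using L4_int4[OF L4_Av[of k] L4_Dv[of k] L4_Av[of l] L4_Dv[of l]] by (simp add: T1_def mult.assoc)

lemma T2_int: "integrable M (\<lambda>\<omega>. T2 k \<omega> * T2 l \<omega>)"
proof -
  have e: "T2 k \<omega> * T2 l \<omega> = Dv k \<omega> * Dv k \<omega> * Dv l \<omega> * Dv l \<omega> - Dv k \<omega> * Dv k \<omega> * sig (XX (l-1) \<omega>) * 1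
     - (sig (XX (k-1) \<omega>) * Dv l \<omega> * Dv l \<omega> * 1 - sig (XX (k-1) \<omega>) * sig (XX (l-1) \<omega>) * 1 * 1)" for \<omega>
    by (simp add: T2_def power2_eq_square algebra_simps)
  show ?thesis unfolding e
    using L4_int4[OF L4_Dv[of k] L4_Dv[of k] L4_Dv[of l] L4_Dv[of l]]
      L4_int4[OF L4_Dv[of k] L4_Dv[of k] L4_sig[of "l-1"] L4_const[of 1]]
      L4_int4[OF L4_sig[of "k-1"] L4_Dv[of l] L4_Dv[of l] L4_const[of 1]]
      L4_int4[OF L4_sig[of "k-1"] L4_sig[of "l-1"] L4_const[of 1] L4_const[of 1]]
    by (intro Bochner_Integration.integrable_diff) auto
qed

lemma T1_orth: assumes "1 \<le> k" "k < l" shows "(\<integral>\<omega>. T1 k \<omega> * T1 l \<omega> \<partial>M) = 0"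
proof -
  have l: "1 \<le> l" using assms by simp
  define F where "F x y z = (lam * vd x + de) * (vd y - (lam * vd x + de)) * (lam * vd z + de)" for x y z
  have e: "T1 k \<omega> * T1 l \<omega> = F (XX (k-1) \<omega>) (XX k \<omega>) (XX (l-1) \<omega>) * Dv l \<omega>" for \<omega>
    unfolding F_def T1_def Av_X Dv_X[OF assms(1)] by (simp add: mult.assoc)
  have "(\<integral>\<omega>. F (XX (k-1) \<omega>) (XX k \<omega>) (XX (l-1) \<omega>) * Dv l \<omega> \<partial>M) = 0"
    by (rule mart_V'[OF l]) (use assms T1_int[of k l] e in auto)
  then show ?thesis unfolding e .
qed

lemma T2_orth: assumes "1 \<le> k" "k < l" shows "(\<integral>\<omega>. T2 k \<omega> * T2 l \<omega> \<partial>M) = 0"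
proof -
  have l: "1 \<le> l" using assms by simp
  define F where "F x y (z::nat^2) = (vd y - (lam * vd x + de))^2 - sig x" for x y z
  have e: "T2 k \<omega> * T2 l \<omega> = F (XX (k-1) \<omega>) (XX k \<omega>) (XX k \<omega>) * (Dv l \<omega> ^ 2 - sig (XX (l-1) \<omega>))" for \<omega>
    unfolding F_def T2_def Dv_X[OF assms(1)] by simp
  have "(\<integral>\<omega>. F (XX (k-1) \<omega>) (XX k \<omega>) (XX k \<omega>) * (Dv l \<omega> ^ 2 - sig (XX (l-1) \<omega>)) \<partial>M) = 0"
    by (rule mart_V2'[OF l]) (use assms T2_int[of k l] e in auto)
  then show ?thesis unfolding e .
qed

lemma ET1sq: "1 \<le> k \<Longrightarrow> (\<integral>\<omega>. T1 k \<omega> ^ 2 \<partial>M) \<le> (KA + KD) / 2 * (real k)^2"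
proof -
  assume k: "1 \<le> k"
  have "(\<integral>\<omega>. T1 k \<omega> ^ 2 \<partial>M) \<le> (\<integral>\<omega>. (Av k \<omega> ^ 4 + Dv k \<omega> ^ 4) / 2 \<partial>M)"
  proof (rule integral_mono)
    show "integrable M (\<lambda>\<omega>. T1 k \<omega> ^ 2)" using T1_int[of k k] by (simp add: power2_eq_square)
    show "integrable M (\<lambda>\<omega>. (Av k \<omega> ^ 4 + Dv k \<omega> ^ 4) / 2)"
      using L4_int(3)[OF L4_Av[of k]] L4_int(3)[OF L4_Dv[of k]] by simp
    fix \<omega>
    have "\<bar>Av k \<omega> ^ 2 * Dv k \<omega> ^ 2\<bar> \<le> ((Av k \<omega> ^ 2)^2 + (Dv k \<omega> ^ 2)^2) / 2" by (rule abs_prod_sq)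
    then show "T1 k \<omega> ^ 2 \<le> (Av k \<omega> ^ 4 + Dv k \<omega> ^ 4) / 2"
      by (simp add: T1_def power_mult_distrib power_mult[symmetric])
  qed
  also have "\<dots> = ((\<integral>\<omega>. Av k \<omega> ^ 4 \<partial>M) + (\<integral>\<omega>. Dv k \<omega> ^ 4 \<partial>M)) / 2"
    using L4_int(3)[OF L4_Av[of k]] L4_int(3)[OF L4_Dv[of k]] by simp
  also have "\<dots> \<le> (KA * (real k)^2 + KD * (real k)^2) / 2"
    using EAv4[OF k] EDv4[OF k] by simp
  finally show ?thesis by (simp add: algebra_simps)
qed

definition "Ss = s1 + s2 + se"
definition "KS = Ss^2 * (KU + 2 * ce + 1)"

lemma sig_bounds: "0 \<le> sig x" "sig x \<le> Ss * (us x + 1)"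
proof -
  show "0 \<le> sig x" unfolding sig_def using s_nonneg by simp
  have a: "real (x$1) \<le> us x + 1" "real (x$2) \<le> us x + 1" by (auto simp: us_def)
  have q: "se \<le> (us x + 1) * se"
    using mult_nonneg_nonneg[OF us_nonneg[of x] s_nonneg(3)] by (simp add: algebra_simps)
  have "sig x \<le> (us x + 1) * s1 + (us x + 1) * s2 + (us x + 1) * se"
    unfolding sig_def using s_nonneg a q by (intro add_mono mult_right_mono) auto
  then show "sig x \<le> Ss * (us x + 1)" by (simp add: Ss_def algebra_simps)
qed

lemma Esig2: "1 \<le> k \<Longrightarrow> (\<integral>\<omega>. sig (XX (k-1) \<omega>) ^ 2 \<partial>M) \<le> KS * (real k)^2"
proof -
  assume k: "1 \<le> k"
  have Ssn: "0 \<le> Ss" unfolding Ss_def using s_nonneg by simp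
  have LU: "L4 (\<lambda>\<omega>. Up (k-1) \<omega> + 1)" by (intro L4_add L4_Up L4_const)
  have "(\<integral>\<omega>. sig (XX (k-1) \<omega>) ^ 2 \<partial>M) \<le> (\<integral>\<omega>. Ss^2 * (Up (k-1) \<omega> + 1)^2 \<partial>M)"
  proof (rule integral_mono)
    show "integrable M (\<lambda>\<omega>. sig (XX (k-1) \<omega>) ^ 2)" by (rule L4_int(2)[OF L4_sig])
    show "integrable M (\<lambda>\<omega>. Ss^2 * (Up (k-1) \<omega> + 1)^2)" using L4_int(2)[OF LU] by simp
    fix \<omega>
    have "sig (XX (k-1) \<omega>) ^ 2 \<le> (Ss * (Up (k-1) \<omega> + 1))^2"
      using sig_bounds[of "XX (k-1) \<omega>"] by (intro power_mono) (auto simp: Up_def)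
    then show "sig (XX (k-1) \<omega>) ^ 2 \<le> Ss^2 * (Up (k-1) \<omega> + 1)^2" by (simp add: power_mult_distrib)
  qed
  also have "\<dots> = Ss^2 * (\<integral>\<omega>. (Up (k-1) \<omega> + 1)^2 \<partial>M)" by simp
  also have "\<dots> \<le> Ss^2 * (KU * (real (k-1))^2 + 2 * real (k-1) * ce + 1)"
    by (rule mult_left_mono[OF EUp1sq]) simp
  also have "\<dots> \<le> Ss^2 * ((KU + 2 * ce + 1) * (real k)^2)"
  proof (rule mult_left_mono)
    have r: "real (k-1) \<le> real k" "1 \<le> real k" using k by auto
    have a: "(real (k-1))^2 \<le> (real k)^2" using r by (intro power_mono) auto
    have ll: "real k \<le> (real k)^2" using r by (simp add: power2_eq_square)
    have b: "real (k-1) \<le> (real k)^2" using r ll by linarith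
    have c: "1 \<le> (real k)^2" using r ll by linarith
    have "KU * (real (k-1))^2 \<le> KU * (real k)^2" by (rule mult_left_mono[OF a KU_nonneg])
    moreover have "2 * real (k-1) * ce \<le> 2 * (real k)^2 * ce" using b ce_nonneg by (simp add: mult_right_mono)
    ultimately show "KU * (real (k-1))^2 + 2 * real (k-1) * ce + 1 \<le> (KU + 2 * ce + 1) * (real k)^2"
      using c by (simp add: algebra_simps)
  qed simp
  finally show ?thesis by (simp add: KS_def mult.assoc)
qed

lemma ET2sq: "1 \<le> k \<Longrightarrow> (\<integral>\<omega>. T2 k \<omega> ^ 2 \<partial>M) \<le> 2 * (KD + KS) * (real k)^2"
proof -
  assume k: "1 \<le> k"
  have "(\<integral>\<omega>. T2 k \<omega> ^ 2 \<partial>M) \<le> (\<integral>\<omega>. 2 * Dv k \<omega> ^ 4 + 2 * sig (XX (k-1) \<omega>) ^ 2 \<partial>M)"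
  proof (rule integral_mono)
    show "integrable M (\<lambda>\<omega>. T2 k \<omega> ^ 2)" using T2_int[of k k] by (simp add: power2_eq_square)
    show "integrable M (\<lambda>\<omega>. 2 * Dv k \<omega> ^ 4 + 2 * sig (XX (k-1) \<omega>) ^ 2)"
      using L4_int(3)[OF L4_Dv[of k]] L4_int(2)[OF L4_sig[of "k-1"]] by simp
    fix \<omega>
    have "0 \<le> (Dv k \<omega> ^ 2 + sig (XX (k-1) \<omega>))^2" by simp
    then show "T2 k \<omega> ^ 2 \<le> 2 * Dv k \<omega> ^ 4 + 2 * sig (XX (k-1) \<omega>) ^ 2"
      unfolding T2_def by (simp add: power2_eq_square power4_eq_xxxx algebra_simps)
  qed
  also have "\<dots> = 2 * (\<integral>\<omega>. Dv k \<omega> ^ 4 \<partial>M) + 2 * (\<integral>\<omega>. sig (XX (k-1) \<omega>) ^ 2 \<partial>M)"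
    using L4_int(3)[OF L4_Dv[of k]] L4_int(2)[OF L4_sig[of "k-1"]] by simp
  also have "\<dots> \<le> 2 * (KD * (real k)^2) + 2 * (KS * (real k)^2)"
    using EDv4[OF k] Esig2[OF k] by simp
  finally show ?thesis by (simp add: algebra_simps)
qed

end

lemma sum_shift1: fixes g :: "nat \<Rightarrow> real" and n :: nat shows "(\<Sum>k=1..n. g (k - 1)) = (\<Sum>k=1..n. g k) + g 0 - (g n :: real)"
proof (induction n)
  case 0 then show ?case by simp
next
  case (Suc n)
  then show ?case by (cases n) (simp_all add: algebra_simps)
qed

lemma five_sq: "((a::real) + b + c + d + e)^2 \<le> 5 * (a^2 + b^2 + c^2 + d^2 + e^2)"
proof -
  have "0 \<le> (a-b)^2 + (a-c)^2 + (a-d)^2 + (a-e)^2 + (b-c)^2 + (b-d)^2 + (b-e)^2 + (c-d)^2 + (c-e)^2 + (d-e)^2"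
    by simp
  then show ?thesis by (simp add: power2_eq_square algebra_simps)
qed

lemma sum_sq_bound: assumes "0 \<le> C" "\<And>k. k \<in> {1..n} \<Longrightarrow> f k \<le> C * (real k)^2"
  shows "(\<Sum>k=1..n. f k) \<le> C * (real n)^3"
proof -
  have "(\<Sum>k=1..n. f k) \<le> (\<Sum>k=1..n. C * (real n)^2)"
  proof (rule sum_mono)
    fix k assume k: "k \<in> {1..n}"
    have "(real k)^2 \<le> (real n)^2" using k by (intro power_mono) auto
    then have "C * (real k)^2 \<le> C * (real n)^2" by (rule mult_left_mono) (rule assms(1))
    then show "f k \<le> C * (real n)^2" using assms(2)[OF k] by linarith
  qed
  also have "\<dots> = C * (real n)^3" by (simp add: power2_eq_square power3_eq_cube)
  finally show ?thesis .
qed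

context prob_space begin

lemma L4_sum: "(\<And>k. k \<in> S \<Longrightarrow> L4 (f k)) \<Longrightarrow> L4 (\<lambda>\<omega>. \<Sum>k\<in>S. f k \<omega>)"
proof (induction S rule: infinite_finite_induct)
  case (infinite S) then show ?case by simp
next
  case empty then show ?case by simp
next
  case (insert x F) then show ?case by (simp add: L4_add)
qed

lemma int_sum_sq:
  fixes f :: "nat \<Rightarrow> 'a \<Rightarrow> real"
  assumes "\<And>k l. k \<in> S \<Longrightarrow> l \<in> S \<Longrightarrow> integrable M (\<lambda>\<omega>. f k \<omega> * f l \<omega>)"
  shows "integrable M (\<lambda>\<omega>. (\<Sum>k\<in>S. f k \<omega>)^2)"
proof -
  have "(\<lambda>\<omega>. (\<Sum>k\<in>S. f k \<omega>)^2) = (\<lambda>\<omega>. \<Sum>k\<in>S. \<Sum>l\<in>S. f k \<omega> * f l \<omega>)"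
    by (rule ext) (simp add: power2_eq_square sum_product)
  then show ?thesis using assms by (simp add: Bochner_Integration.integrable_sum)
qed

end

context bp begin

definition "c0 = (s1 + s2) / 2"
definition "ee = 2 * lam * de + (s1 - s2) / 2"
definition "K0 = de^2 + se"

lemma sig_UV: "sig (XX k \<omega>) = c0 * Up k \<omega> + (s1 - s2) / 2 * Vp k \<omega> + se"
  unfolding sig_def c0_def Up_def Vp_def vd_us_comp[of "XX k \<omega>"] by (simp add: field_simps)

lemma Vp_step: "1 \<le> k \<Longrightarrow> Vp k \<omega> ^ 2 = lam^2 * Vp (k-1) \<omega> ^ 2 + ee * Vp (k-1) \<omega> + K0 + 2 * T1 k \<omega> + T2 k \<omega> + c0 * Up (k-1) \<omega>"
proof -
  assume k: "1 \<le> k"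
  have "Vp k \<omega> = Av k \<omega> + Dv k \<omega>" by (simp add: Dv_def)
  then have "Vp k \<omega> ^ 2 = Av k \<omega> ^ 2 + 2 * T1 k \<omega> + T2 k \<omega> + sig (XX (k-1) \<omega>)"
    by (simp add: T1_def T2_def power2_eq_square algebra_simps)
  also have "\<dots> = lam^2 * Vp (k-1) \<omega> ^ 2 + ee * Vp (k-1) \<omega> + K0 + 2 * T1 k \<omega> + T2 k \<omega> + c0 * Up (k-1) \<omega>"
    unfolding sig_UV Av_def ee_def K0_def by (simp add: power2_eq_square algebra_simps)
  finally show ?thesis .
qed

definition "Zc n \<omega> = (\<Sum>k=1..n. Vp k \<omega> ^ 2) - c0 / (1 - lam^2) * (\<Sum>k=1..n. Up (k - 1) \<omega>)"

lemma lam2: "0 < 1 - lam^2"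
proof -
  have "\<bar>lam\<bar> * \<bar>lam\<bar> < 1 * 1" using lam_lt1 by (intro mult_strict_mono) auto
  then show ?thesis by (simp add: power2_eq_square abs_mult[symmetric])
qed

lemma Zc_decomp: "(1 - lam^2) * Zc n \<omega> = (- (lam^2)) * Vp n \<omega> ^ 2 + ee * (\<Sum>k=1..n. Vp (k-1) \<omega>) + real n * K0
    + 2 * (\<Sum>k=1..n. T1 k \<omega>) + (\<Sum>k=1..n. T2 k \<omega>)"
proof -
  have S: "(\<Sum>k=1..n. Vp k \<omega> ^ 2) = lam^2 * (\<Sum>k=1..n. Vp (k-1) \<omega> ^ 2) + ee * (\<Sum>k=1..n. Vp (k-1) \<omega>) + real n * K0
      + 2 * (\<Sum>k=1..n. T1 k \<omega>) + (\<Sum>k=1..n. T2 k \<omega>) + c0 * (\<Sum>k=1..n. Up (k-1) \<omega>)"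
  proof -
    have "(\<Sum>k=1..n. Vp k \<omega> ^ 2) = (\<Sum>k=1..n. lam^2 * Vp (k-1) \<omega> ^ 2 + ee * Vp (k-1) \<omega> + K0 + 2 * T1 k \<omega> + T2 k \<omega> + c0 * Up (k-1) \<omega>)"
      by (rule sum.cong[OF refl]) (simp add: Vp_step)
    also have "\<dots> = lam^2 * (\<Sum>k=1..n. Vp (k-1) \<omega> ^ 2) + ee * (\<Sum>k=1..n. Vp (k-1) \<omega>) + real n * K0
      + 2 * (\<Sum>k=1..n. T1 k \<omega>) + (\<Sum>k=1..n. T2 k \<omega>) + c0 * (\<Sum>k=1..n. Up (k-1) \<omega>)"
      by (simp add: sum.distrib sum_distrib_left)
    finally show ?thesis .
  qed
  have sh: "(\<Sum>k=1..n. Vp (k-1) \<omega> ^ 2) = (\<Sum>k=1..n. Vp k \<omega> ^ 2) - Vp n \<omega> ^ 2"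
    using sum_shift1[of "\<lambda>k. Vp k \<omega> ^ 2" n] by (simp add: Vp_def vd_def)
  have l2: "1 - lam^2 \<noteq> 0" using lam2 by simp
  define Sv where "Sv = (\<Sum>k=1..n. Vp k \<omega> ^ 2)"
  define SU where "SU = (\<Sum>k=1..n. Up (k-1) \<omega>)"
  define R where "R = ee * (\<Sum>k=1..n. Vp (k-1) \<omega>) + real n * K0 + 2 * (\<Sum>k=1..n. T1 k \<omega>) + (\<Sum>k=1..n. T2 k \<omega>)"
  have S': "Sv = lam^2 * (Sv - Vp n \<omega> ^ 2) + R + c0 * SU" using S sh unfolding Sv_def SU_def R_def by simp
  have e1: "lam^2 * (Sv - Vp n \<omega> ^ 2) = lam^2 * Sv - lam^2 * Vp n \<omega> ^ 2" by (simp add: right_diff_distrib)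
  have e2: "(1 - lam^2) * Zc n \<omega> = Sv - lam^2 * Sv - c0 * SU"
  proof -
    have "(1 - lam^2) * (c0 / (1 - lam^2) * SU) = c0 * SU" using l2 by simp
    then show ?thesis unfolding Zc_def Sv_def[symmetric] SU_def[symmetric] by (simp add: right_diff_distrib left_diff_distrib)
  qed
  have "(1 - lam^2) * Zc n \<omega> = (- (lam^2)) * Vp n \<omega> ^ 2 + R" using S' e1 e2 by linarith
  then show ?thesis unfolding R_def by simp
qed

definition "CF = 5 * (lam^4 * KV + ee^2 * ((KV + 1) / 2) + K0^2 + 2 * (KA + KD) + 2 * (KD + KS))"

lemma KA_nonneg: "0 \<le> KA" unfolding KA_def using KV_nonneg th_props by simp
lemma KS_nonneg: "0 \<le> KS" unfolding KS_def using KU_nonneg ce_nonneg by simp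

lemma EZc: assumes n: "1 \<le> n"
  shows "(\<integral>\<omega>. ((1 - lam^2) * Zc n \<omega>)^2 \<partial>M) \<le> CF * (real n)^3"
proof -
  define A where "A \<omega> = (- (lam^2)) * Vp n \<omega> ^ 2" for \<omega>
  define B where "B \<omega> = ee * (\<Sum>k=1..n. Vp (k-1) \<omega>)" for \<omega>
  define C where "C (\<omega>::'a) = real n * K0" for \<omega>
  define D where "D \<omega> = 2 * (\<Sum>k=1..n. T1 k \<omega>)" for \<omega>
  define E where "E \<omega> = (\<Sum>k=1..n. T2 k \<omega>)" for \<omega>
  have dec: "(1 - lam^2) * Zc n \<omega> = A \<omega> + B \<omega> + C \<omega> + D \<omega> + E \<omega>" for \<omega>
    unfolding A_def B_def C_def D_def E_def by (rule Zc_decomp)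
  have iA: "integrable M (\<lambda>\<omega>. A \<omega> ^ 2)" unfolding A_def using L4_int(3)[OF L4_Vp[of n]]
    by (simp add: power_mult_distrib power_mult[symmetric])
  have LB: "L4 B" unfolding B_def by (intro L4_cmult L4_sum) (rule L4_Vp)
  have iB: "integrable M (\<lambda>\<omega>. B \<omega> ^ 2)" by (rule L4_int(2)[OF LB])
  have iD: "integrable M (\<lambda>\<omega>. D \<omega> ^ 2)"
    unfolding D_def using int_sum_sq[of "{1..n}" T1] T1_int by (simp add: power_mult_distrib)
  have iE: "integrable M (\<lambda>\<omega>. E \<omega> ^ 2)"
    unfolding E_def using int_sum_sq[of "{1..n}" T2] T2_int by simp
  have "(\<integral>\<omega>. ((1 - lam^2) * Zc n \<omega>)^2 \<partial>M) \<le> (\<integral>\<omega>. 5 * (A \<omega>^2 + B \<omega>^2 + C \<omega>^2 + D \<omega>^2 + E \<omega>^2) \<partial>M)"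
  proof (rule integral_mono)
    have mT1: "T1 k \<in> borel_measurable M" for k
      using L4_Av[of k] L4_Dv[of k] unfolding L4_def T1_def[abs_def] by (auto intro!: borel_measurable_times)
    have mT2: "T2 k \<in> borel_measurable M" for k
      using L4_Dv[of k] L4_sig[of "k-1"] unfolding L4_def T2_def[abs_def] by (auto intro!: borel_measurable_diff borel_measurable_power)
    have mV: "Vp k \<in> borel_measurable M" for k using L4_Vp[of k] unfolding L4_def by simp
    have mall: "(\<lambda>\<omega>. (A \<omega> + B \<omega> + C \<omega> + D \<omega> + E \<omega>)^2) \<in> borel_measurable M"
      unfolding A_def B_def C_def D_def E_def using mT1 mT2 mV by measurable
    have ib: "integrable M (\<lambda>\<omega>. 5 * (A \<omega>^2 + B \<omega>^2 + C \<omega>^2 + D \<omega>^2 + E \<omega>^2))"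
      using iA iB iD iE by (simp add: C_def)
    have "integrable M (\<lambda>\<omega>. (A \<omega> + B \<omega> + C \<omega> + D \<omega> + E \<omega>)^2)"
    proof (rule Bochner_Integration.integrable_bound[OF ib mall])
      show "AE \<omega> in M. norm ((A \<omega> + B \<omega> + C \<omega> + D \<omega> + E \<omega>)^2) \<le> norm (5 * (A \<omega>^2 + B \<omega>^2 + C \<omega>^2 + D \<omega>^2 + E \<omega>^2))"
      proof (rule AE_I2)
        fix \<omega>
        have "0 \<le> 5 * (A \<omega>^2 + B \<omega>^2 + C \<omega>^2 + D \<omega>^2 + E \<omega>^2)" by simp
        then show "norm ((A \<omega> + B \<omega> + C \<omega> + D \<omega> + E \<omega>)^2) \<le> norm (5 * (A \<omega>^2 + B \<omega>^2 + C \<omega>^2 + D \<omega>^2 + E \<omega>^2))"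
          using five_sq[of "A \<omega>" "B \<omega>" "C \<omega>" "D \<omega>" "E \<omega>"] by (simp only: real_norm_def abs_of_nonneg zero_le_power2)
      qed
    qed
    then show "integrable M (\<lambda>\<omega>. ((1 - lam^2) * Zc n \<omega>)^2)" unfolding dec .
    show "integrable M (\<lambda>\<omega>. 5 * (A \<omega>^2 + B \<omega>^2 + C \<omega>^2 + D \<omega>^2 + E \<omega>^2))"
      using iA iB iD iE by (simp add: C_def)
    fix \<omega> show "((1 - lam^2) * Zc n \<omega>)^2 \<le> 5 * (A \<omega>^2 + B \<omega>^2 + C \<omega>^2 + D \<omega>^2 + E \<omega>^2)"
      unfolding dec by (rule five_sq)
  qed
  also have "\<dots> = 5 * ((\<integral>\<omega>. A \<omega>^2 \<partial>M) + (\<integral>\<omega>. B \<omega>^2 \<partial>M) + (real n * K0)^2 + (\<integral>\<omega>. D \<omega>^2 \<partial>M) + (\<integral>\<omega>. E \<omega>^2 \<partial>M))"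
    using iA iB iD iE by (simp add: C_def prob_space)
  also have "\<dots> \<le> 5 * (lam^4 * KV * (real n)^3 + ee^2 * ((KV + 1) / 2) * (real n)^3 + K0^2 * (real n)^3
       + 2 * (KA + KD) * (real n)^3 + 2 * (KD + KS) * (real n)^3)"
  proof (intro mult_left_mono add_mono)
    have n2: "(real n)^2 \<le> (real n)^3" using n by (simp add: power2_eq_square power3_eq_cube)
    show "(\<integral>\<omega>. A \<omega>^2 \<partial>M) \<le> lam^4 * KV * (real n)^3"
    proof -
      have "(\<integral>\<omega>. A \<omega>^2 \<partial>M) = lam^4 * (\<integral>\<omega>. Vp n \<omega> ^ 4 \<partial>M)"
        unfolding A_def by (simp add: power_mult_distrib power_mult[symmetric])
      also have "\<dots> \<le> lam^4 * (KV * (real n)^2)" by (rule mult_left_mono[OF EVp4]) simp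
      also have "\<dots> \<le> lam^4 * (KV * (real n)^3)" using n2 KV_nonneg by (intro mult_left_mono) auto
      finally show ?thesis by (simp add: mult.assoc)
    qed
    show "(real n * K0)^2 \<le> K0^2 * (real n)^3"
      using mult_left_mono[OF n2, of "K0^2"] by (simp add: power_mult_distrib mult.commute)
    show "(\<integral>\<omega>. B \<omega>^2 \<partial>M) \<le> ee^2 * ((KV + 1) / 2) * (real n)^3"
    proof -
      have "(\<integral>\<omega>. B \<omega>^2 \<partial>M) \<le> (\<integral>\<omega>. ee^2 * (real n * (\<Sum>k=1..n. Vp (k-1) \<omega> ^ 2)) \<partial>M)"
      proof (rule integral_mono[OF iB])
        show "integrable M (\<lambda>\<omega>. ee^2 * (real n * (\<Sum>k=1..n. Vp (k-1) \<omega> ^ 2)))"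
          using L4_int(2)[OF L4_Vp] by (simp add: Bochner_Integration.integrable_sum)
        fix \<omega>
        have "(\<Sum>k=1..n. Vp (k-1) \<omega>)^2 \<le> (\<Sum>k=1..n. Vp (k-1) \<omega> ^ 2) * card {1..n}"
          by (rule sum_squared_le_sum_of_squares)
        then have "(\<Sum>k=1..n. Vp (k-1) \<omega>)^2 \<le> real n * (\<Sum>k=1..n. Vp (k-1) \<omega> ^ 2)" by (simp add: mult.commute)
        then show "B \<omega>^2 \<le> ee^2 * (real n * (\<Sum>k=1..n. Vp (k-1) \<omega> ^ 2))"
          unfolding B_def by (simp add: power_mult_distrib mult_left_mono)
      qed
      also have "\<dots> = ee^2 * (real n * (\<Sum>k=1..n. \<integral>\<omega>. Vp (k-1) \<omega> ^ 2 \<partial>M))"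
        using L4_int(2)[OF L4_Vp] by (simp add: Bochner_Integration.integral_sum)
      also have "\<dots> \<le> ee^2 * (real n * ((KV + 1) / 2 * (real n)^2))"
      proof (intro mult_left_mono)
        have "(\<Sum>k=1..n. \<integral>\<omega>. Vp (k-1) \<omega> ^ 2 \<partial>M) \<le> (\<Sum>k=1..n. (KV + 1) / 2 * real n)"
        proof (rule sum_mono)
          fix k assume k: "k \<in> {1..n}"
          have "(KV + 1) / 2 * real (k-1) \<le> (KV + 1) / 2 * real n"
            using k KV_nonneg by (intro mult_left_mono) auto
          then show "(\<integral>\<omega>. Vp (k-1) \<omega> ^ 2 \<partial>M) \<le> (KV + 1) / 2 * real n" using EVp2[of "k-1"] by linarith
        qed
        also have "(\<Sum>k=1..n. (KV + 1) / 2 * real n) = (KV + 1) / 2 * (real n)^2"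
          by (simp add: power2_eq_square)
        finally show "(\<Sum>k=1..n. \<integral>\<omega>. Vp (k-1) \<omega> ^ 2 \<partial>M) \<le> (KV + 1) / 2 * (real n)^2" .
      qed auto
      finally show ?thesis by (simp add: power2_eq_square power3_eq_cube algebra_simps)
    qed
    show "(\<integral>\<omega>. D \<omega>^2 \<partial>M) \<le> 2 * (KA + KD) * (real n)^3"
    proof -
      have "(\<integral>\<omega>. D \<omega>^2 \<partial>M) = 4 * (\<integral>\<omega>. (\<Sum>k=1..n. T1 k \<omega>)^2 \<partial>M)"
        unfolding D_def by (simp add: power_mult_distrib)
      also have "(\<integral>\<omega>. (\<Sum>k=1..n. T1 k \<omega>)^2 \<partial>M) = (\<Sum>k=1..n. \<integral>\<omega>. T1 k \<omega> ^ 2 \<partial>M)"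
        by (rule orth_sum) (auto intro: T1_int T1_orth)
      also have "\<dots> \<le> (KA + KD) / 2 * (real n)^3"
        by (rule sum_sq_bound) (use KA_nonneg KD_nonneg ET1sq in auto)
      finally show ?thesis by (simp add: algebra_simps)
    qed
    show "(\<integral>\<omega>. E \<omega>^2 \<partial>M) \<le> 2 * (KD + KS) * (real n)^3"
    proof -
      have "(\<integral>\<omega>. E \<omega>^2 \<partial>M) = (\<Sum>k=1..n. \<integral>\<omega>. T2 k \<omega> ^ 2 \<partial>M)"
        unfolding E_def by (rule orth_sum) (auto intro: T2_int T2_orth)
      also have "\<dots> \<le> 2 * (KD + KS) * (real n)^3"
        by (rule sum_sq_bound) (use KD_nonneg KS_nonneg ET2sq in auto)
      finally show ?thesis .
    qed
  qed simp
  also have "\<dots> = CF * (real n)^3" unfolding CF_def by (simp add: algebra_simps)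
  finally show ?thesis .
qed

end

lemma quad2: "((A :: real^2^2) *v vector [1, -1]) \<bullet> vector [1, -1] = A$1$1 - A$1$2 - A$2$1 + A$2$2"
  by (simp add: matrix_vector_mult_def inner_vec_def sum_2 algebra_simps)

context prob_space begin

lemma var_quad:
  fixes X :: "'a \<Rightarrow> nat^2"
  assumes Xm: "X \<in> measurable M (count_space UNIV)"
    and i8: "integrable M (\<lambda>\<omega>. norm (vreal (X \<omega>)) ^ 8)"
  defines "m \<equiv> (\<integral>\<omega>. vreal (X \<omega>) \<partial>M)"
  shows "var_mat M (\<lambda>\<omega>. vreal (X \<omega>)) $1$1 - var_mat M (\<lambda>\<omega>. vreal (X \<omega>)) $1$2
       - var_mat M (\<lambda>\<omega>. vreal (X \<omega>)) $2$1 + var_mat M (\<lambda>\<omega>. vreal (X \<omega>)) $2$2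
       = (\<integral>\<omega>. (vd (X \<omega>) - (m$1 - m$2))^2 \<partial>M)"
proof -
  define Y where "Y i \<omega> = real (X \<omega> $ i) - m$i" for i \<omega>
  have b: "\<bar>real (v$i)\<bar> \<le> 2 * norm (vreal v)" for v :: "nat^2" and i
  proof -
    have "\<bar>vreal v $ i\<bar> \<le> norm (vreal v)" by (rule component_le_norm_cart)
    then show ?thesis by (simp add: vreal_def)
  qed
  have L: "L4 (Y i)" for i
  proof -
    have "integrable M (\<lambda>\<omega>. (real (X \<omega> $ i) - m$i) ^ 4)"
      by (rule mom_helper[OF Xm i8]) (rule b)
    moreover have "Y i \<in> borel_measurable M"
      unfolding Y_def[abs_def] using measurable_compose[OF Xm, of "\<lambda>v. real (v$i) - m$i" borel] by simp
    ultimately show ?thesis unfolding L4_def Y_def by simp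
  qed
  have vm: "var_mat M (\<lambda>\<omega>. vreal (X \<omega>)) $ a $ b = (\<integral>\<omega>. Y a \<omega> * Y b \<omega> \<partial>M)" for a b
    unfolding var_mat_def Y_def m_def by (simp add: vreal_def)
  have e: "(vd (X \<omega>) - (m$1 - m$2))^2 = Y 1 \<omega> * Y 1 \<omega> - Y 1 \<omega> * Y 2 \<omega> - Y 2 \<omega> * Y 1 \<omega> + Y 2 \<omega> * Y 2 \<omega>" for \<omega>
    unfolding Y_def vd_def by (simp add: power2_eq_square algebra_simps)
  have I: "integrable M (\<lambda>\<omega>. Y a \<omega> * Y b \<omega>)" for a b
    using L4_int4[OF L[of a] L[of b] L4_const[of 1] L4_const[of 1]] by simp
  have c: "(\<lambda>\<omega>. Y 2 \<omega> * Y 1 \<omega>) = (\<lambda>\<omega>. Y 1 \<omega> * Y 2 \<omega>)" by (auto simp: mult.commute)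
  show ?thesis unfolding vm e c using I by simp
qed

end

context bp begin

lemma const_eq:
  "((((1/2) *\<^sub>R (var_mat M (\<lambda>\<omega>. vreal (xi1 1 1 \<omega>)) + var_mat M (\<lambda>\<omega>. vreal (xi2 1 1 \<omega>))))
              *v vector [1, -1]) \<bullet> vector [1, -1]) / (4 * \<alpha> * \<beta>) = c0 / (1 - lam^2)"
proof -
  have q1: "var_mat M (\<lambda>\<omega>. vreal (xi1 1 1 \<omega>)) $1$1 - var_mat M (\<lambda>\<omega>. vreal (xi1 1 1 \<omega>)) $1$2
       - var_mat M (\<lambda>\<omega>. vreal (xi1 1 1 \<omega>)) $2$1 + var_mat M (\<lambda>\<omega>. vreal (xi1 1 1 \<omega>)) $2$2 = s1"
    using var_quad[OF meas11(1) mom1] unfolding mean1 s1_def lam_def by simp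
  have q2: "var_mat M (\<lambda>\<omega>. vreal (xi2 1 1 \<omega>)) $1$1 - var_mat M (\<lambda>\<omega>. vreal (xi2 1 1 \<omega>)) $1$2
       - var_mat M (\<lambda>\<omega>. vreal (xi2 1 1 \<omega>)) $2$1 + var_mat M (\<lambda>\<omega>. vreal (xi2 1 1 \<omega>)) $2$2 = s2"
    using var_quad[OF meas11(2) mom2] unfolding mean2 s2_def lam_def by simp
  have ab4: "4 * \<alpha> * \<beta> = 1 - lam^2"
  proof -
    have "4 * \<alpha> * \<beta> = (\<alpha> + \<beta>)^2 - (\<alpha> - \<beta>)^2" by (simp add: power2_eq_square algebra_simps)
    then show ?thesis unfolding lam_def using ab(5) by simp
  qed
  define V1 where "V1 = var_mat M (\<lambda>\<omega>. vreal (xi1 1 1 \<omega>))"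
  define V2 where "V2 = var_mat M (\<lambda>\<omega>. vreal (xi2 1 1 \<omega>))"
  have Q: "(((1/2) *\<^sub>R (V1 + V2)) *v vector [1, -1]) \<bullet> vector [1, -1]
     = (1/2) * (V1$1$1 - V1$1$2 - V1$2$1 + V1$2$2) + (1/2) * (V2$1$1 - V2$1$2 - V2$2$1 + V2$2$2)"
    unfolding quad2 by (simp add: algebra_simps)
  also have "\<dots> = c0" unfolding c0_def using q1 q2 unfolding V1_def V2_def by simp
  finally show ?thesis unfolding ab4 V1_def V2_def by simp
qed

end

context bp begin

lemma int_Zc: "integrable M (\<lambda>\<omega>. ((1 - lam^2) * Zc n \<omega>)^2)"
proof -
  define A where "A \<omega> = (- (lam^2)) * Vp n \<omega> ^ 2" for \<omega>
  define B where "B \<omega> = ee * (\<Sum>k=1..n. Vp (k-1) \<omega>)" for \<omega>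
  define C where "C (\<omega>::'a) = real n * K0" for \<omega>
  define D where "D \<omega> = 2 * (\<Sum>k=1..n. T1 k \<omega>)" for \<omega>
  define E where "E \<omega> = (\<Sum>k=1..n. T2 k \<omega>)" for \<omega>
  have dec: "(1 - lam^2) * Zc n \<omega> = A \<omega> + B \<omega> + C \<omega> + D \<omega> + E \<omega>" for \<omega>
    unfolding A_def B_def C_def D_def E_def by (rule Zc_decomp)
  have iA: "integrable M (\<lambda>\<omega>. A \<omega> ^ 2)" unfolding A_def using L4_int(3)[OF L4_Vp[of n]]
    by (simp add: power_mult_distrib power_mult[symmetric])
  have LB: "L4 B" unfolding B_def by (intro L4_cmult L4_sum) (rule L4_Vp)
  have iB: "integrable M (\<lambda>\<omega>. B \<omega> ^ 2)" by (rule L4_int(2)[OF LB])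
  have iD: "integrable M (\<lambda>\<omega>. D \<omega> ^ 2)"
    unfolding D_def using int_sum_sq[of "{1..n}" T1] T1_int by (simp add: power_mult_distrib)
  have iE: "integrable M (\<lambda>\<omega>. E \<omega> ^ 2)"
    unfolding E_def using int_sum_sq[of "{1..n}" T2] T2_int by simp
  have mT1: "T1 k \<in> borel_measurable M" for k
    using L4_Av[of k] L4_Dv[of k] unfolding L4_def T1_def[abs_def] by (auto intro!: borel_measurable_times)
  have mT2: "T2 k \<in> borel_measurable M" for k
    using L4_Dv[of k] L4_sig[of "k-1"] unfolding L4_def T2_def[abs_def] by (auto intro!: borel_measurable_diff borel_measurable_power)
  have mV: "Vp k \<in> borel_measurable M" for k using L4_Vp[of k] unfolding L4_def by simp
  have mall: "(\<lambda>\<omega>. (A \<omega> + B \<omega> + C \<omega> + D \<omega> + E \<omega>)^2) \<in> borel_measurable M"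
    unfolding A_def B_def C_def D_def E_def using mT1 mT2 mV by measurable
  have ib: "integrable M (\<lambda>\<omega>. 5 * (A \<omega>^2 + B \<omega>^2 + C \<omega>^2 + D \<omega>^2 + E \<omega>^2))"
    using iA iB iD iE by (simp add: C_def)
  have "integrable M (\<lambda>\<omega>. (A \<omega> + B \<omega> + C \<omega> + D \<omega> + E \<omega>)^2)"
  proof (rule Bochner_Integration.integrable_bound[OF ib mall])
    show "AE \<omega> in M. norm ((A \<omega> + B \<omega> + C \<omega> + D \<omega> + E \<omega>)^2) \<le> norm (5 * (A \<omega>^2 + B \<omega>^2 + C \<omega>^2 + D \<omega>^2 + E \<omega>^2))"
    proof (rule AE_I2)
      fix \<omega>
      have "0 \<le> 5 * (A \<omega>^2 + B \<omega>^2 + C \<omega>^2 + D \<omega>^2 + E \<omega>^2)" by simp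
      then show "norm ((A \<omega> + B \<omega> + C \<omega> + D \<omega> + E \<omega>)^2) \<le> norm (5 * (A \<omega>^2 + B \<omega>^2 + C \<omega>^2 + D \<omega>^2 + E \<omega>^2))"
        using five_sq[of "A \<omega>" "B \<omega>" "C \<omega>" "D \<omega>" "E \<omega>"] by (simp only: real_norm_def abs_of_nonneg zero_le_power2)
    qed
  qed
  then show ?thesis unfolding dec .
qed

lemma main_conv: "conv_prob_zero M (\<lambda>n \<omega>. (1 / (real n)^2) * Zc n \<omega>)"
  unfolding conv_prob_zero_def
proof (intro allI impI)
  fix e :: real assume e: "0 < e"
  define K where "K = CF / ((1 - lam^2)^2 * e^2)"
  have l2: "0 < 1 - lam^2" by (rule lam2)
  have bound: "measure M {\<omega> \<in> space M. \<bar>1 / (real n)^2 * Zc n \<omega>\<bar> > e} \<le> K / real n" if n: "1 \<le> n" for n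
  proof -
    define W where "W \<omega> = ((1 - lam^2) * Zc n \<omega>)^2" for \<omega>
    define c where "c = ((1 - lam^2) * e * (real n)^2)^2"
    have np: "0 < real n" using n by simp
    have cp: "0 < c" unfolding c_def using l2 e np by simp
    have iW: "integrable M W" unfolding W_def[abs_def] by (rule int_Zc)
    have sub: "{\<omega> \<in> space M. \<bar>1 / (real n)^2 * Zc n \<omega>\<bar> > e} \<subseteq> {\<omega> \<in> space M. W \<omega> \<ge> c}"
    proof safe
      fix \<omega> assume "\<omega> \<in> space M" and g: "e < \<bar>1 / (real n)^2 * Zc n \<omega>\<bar>"
      have n2: "0 < (real n)^2" using np by simp
      have "e * (real n)^2 < \<bar>Zc n \<omega>\<bar>" using g n2 by (simp add: abs_mult field_simps)
      then have "(1 - lam^2) * (e * (real n)^2) < (1 - lam^2) * \<bar>Zc n \<omega>\<bar>" using l2 by simp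
      then have "(1 - lam^2) * e * (real n)^2 < \<bar>(1 - lam^2) * Zc n \<omega>\<bar>" using l2 by (simp add: abs_mult mult.assoc)
      moreover have "0 \<le> (1 - lam^2) * e * (real n)^2" using l2 e by simp
      ultimately have "((1 - lam^2) * e * (real n)^2)^2 \<le> \<bar>(1 - lam^2) * Zc n \<omega>\<bar>^2"
        by (intro power_mono) auto
      then show "c \<le> W \<omega>" unfolding c_def W_def by simp
    qed
    have Wm: "W \<in> borel_measurable M" using iW by (rule borel_measurable_integrable)
    have "measure M {\<omega> \<in> space M. \<bar>1 / (real n)^2 * Zc n \<omega>\<bar> > e} \<le> measure M {\<omega> \<in> space M. W \<omega> \<ge> c}"
      by (rule finite_measure_mono[OF sub]) (use Wm in measurable)
    also have "\<dots> \<le> (\<integral>\<omega>. W \<omega> \<partial>M) / c"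
      by (rule integral_Markov_inequality_measure[OF iW _ _ cp, of "space M"]) (auto simp: W_def)
    also have "\<dots> \<le> CF * (real n)^3 / c"
      using EZc[OF n] cp unfolding W_def by (simp add: divide_right_mono)
    also have "\<dots> = K / real n"
    proof -
      define Q where "Q = (1 - lam^2)^2 * e^2"
      have c_eq: "c = (Q * real n) * (real n)^3" unfolding c_def Q_def
        by (simp add: power2_eq_square power3_eq_cube algebra_simps)
      have nz: "(real n)^3 \<noteq> 0" using np by simp
      have "CF * (real n)^3 / c = CF / (Q * real n)"
        unfolding c_eq using nz by (rule nonzero_mult_divide_mult_cancel_right)
      also have "\<dots> = K / real n" unfolding K_def Q_def by (simp add: divide_divide_eq_left)
      finally show ?thesis .
    qed
    finally show ?thesis .
  qed
  show "(\<lambda>n. measure M {\<omega> \<in> space M. \<bar>1 / (real n)^2 * Zc n \<omega>\<bar> > e}) \<longlonglongrightarrow> 0"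
  proof (rule tendsto_sandwich[of "\<lambda>_. 0" _ _ "\<lambda>n. K / real n"])
    show "\<forall>\<^sub>F n in sequentially. 0 \<le> measure M {\<omega> \<in> space M. \<bar>1 / (real n)^2 * Zc n \<omega>\<bar> > e}" by simp
    show "\<forall>\<^sub>F n in sequentially. measure M {\<omega> \<in> space M. \<bar>1 / (real n)^2 * Zc n \<omega>\<bar> > e} \<le> K / real n"
      using bound by (auto simp: eventually_sequentially intro!: exI[of _ 1])
    show "(\<lambda>_. 0) \<longlonglongrightarrow> (0::real)" by simp
    show "(\<lambda>n. K / real n) \<longlonglongrightarrow> 0" by (rule lim_const_over_n)
  qed
qed

end

theorem lemmaA2:
  fixes M :: "'a measure"
    and xi1 xi2 :: "nat \<Rightarrow> nat \<Rightarrow> 'a \<Rightarrow> nat^2"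
    and eps :: "nat \<Rightarrow> 'a \<Rightarrow> nat^2"
    and \<alpha> \<beta> :: real
  assumes "prob_space M"
    and indep: "prob_space.indep_vars M (\<lambda>_. count_space UNIV) (noise_family xi1 xi2 eps) noise_indices"
    and id1: "\<And>k j. k \<ge> 1 \<Longrightarrow> j \<ge> 1 \<Longrightarrow>
                distr M (count_space UNIV) (xi1 k j) = distr M (count_space UNIV) (xi1 1 1)"
    and id2: "\<And>k j. k \<ge> 1 \<Longrightarrow> j \<ge> 1 \<Longrightarrow>
                distr M (count_space UNIV) (xi2 k j) = distr M (count_space UNIV) (xi2 1 1)"
    and ideps: "\<And>k. k \<ge> 1 \<Longrightarrow>
                distr M (count_space UNIV) (eps k) = distr M (count_space UNIV) (eps 1)"
    and ab: "0 < \<alpha>" "\<alpha> < 1" "0 < \<beta>" "\<beta> < 1" "\<alpha> + \<beta> = 1"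
    and mean1: "integral\<^sup>L M (\<lambda>\<omega>. vreal (xi1 1 1 \<omega>)) = vector [\<alpha>, \<beta>]"
    and mean2: "integral\<^sup>L M (\<lambda>\<omega>. vreal (xi2 1 1 \<omega>)) = vector [\<beta>, \<alpha>]"
    and mom1: "integrable M (\<lambda>\<omega>. norm (vreal (xi1 1 1 \<omega>)) ^ 8)"
    and mom2: "integrable M (\<lambda>\<omega>. norm (vreal (xi2 1 1 \<omega>)) ^ 8)"
    and mom3: "integrable M (\<lambda>\<omega>. norm (vreal (eps 1 \<omega>)) ^ 8)"
    and epsnz: "integral\<^sup>L M (\<lambda>\<omega>. vreal (eps 1 \<omega>)) \<noteq> 0"
  shows "conv_prob_zero M (\<lambda>n \<omega>.
     (1 / (real n)^2) *
       ((\<Sum>k=1..n. (real (bpi xi1 xi2 eps k \<omega> $ 1) - real (bpi xi1 xi2 eps k \<omega> $ 2))^2)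
        - ((((1/2) *\<^sub>R (var_mat M (\<lambda>\<omega>. vreal (xi1 1 1 \<omega>)) + var_mat M (\<lambda>\<omega>. vreal (xi2 1 1 \<omega>))))
              *v vector [1, -1]) \<bullet> vector [1, -1]) / (4 * \<alpha> * \<beta>)
          * (\<Sum>k=1..n. real (bpi xi1 xi2 eps (k - 1) \<omega> $ 1) + real (bpi xi1 xi2 eps (k - 1) \<omega> $ 2))))"
  proof -
  have bpI: "bp M xi1 xi2 eps \<alpha> \<beta>"
    unfolding bp_def bp_axioms_def using assms by blast
  interpret bp M xi1 xi2 eps \<alpha> \<beta> by (rule bpI)
  have eq: "(\<lambda>n \<omega>.
     (1 / (real n)^2) *
       ((\<Sum>k=1..n. (real (bpi xi1 xi2 eps k \<omega> $ 1) - real (bpi xi1 xi2 eps k \<omega> $ 2))^2)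
        - ((((1/2) *\<^sub>R (var_mat M (\<lambda>\<omega>. vreal (xi1 1 1 \<omega>)) + var_mat M (\<lambda>\<omega>. vreal (xi2 1 1 \<omega>))))
              *v vector [1, -1]) \<bullet> vector [1, -1]) / (4 * \<alpha> * \<beta>)
          * (\<Sum>k=1..n. real (bpi xi1 xi2 eps (k - 1) \<omega> $ 1) + real (bpi xi1 xi2 eps (k - 1) \<omega> $ 2))))
     = (\<lambda>n \<omega>. (1 / (real n)^2) * Zc n \<omega>)"
    unfolding const_eq Zc_def Vp_def Up_def vd_def us_def by simp
  show ?thesis unfolding eq by (rule main_conv)
qed

end
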